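(* Let $\mathcal{H}_A$ and $\mathcal{H}_B$ be finite-dimensional Hilbert spaces, let $H$ be a Hamiltonian (Hermitian operator) on $\mathcal{H}_A\otimes\mathcal{H}_B$, and let $|\psi_0\rangle\in\mathcal{H}_A\otimes\mathcal{H}_B$ be a normalized pure initial state. Let $\{|k_n\rangle\}_{n=0}^{d_K-1}$ be the Krylov basis generated from $|k_0\rangle=|\psi_0\rangle$ and $H$ by the Lanczos algorithm, where $d_K$ is the dimension of the Krylov space. For $t\in\mathbb{R}$ write $|\psi(t)\rangle=e^{-iHt}|\psi_0\rangle=\sum_{n=0}^{d_K-1}c_n(t)|k_n\rangle$ with $c_n(t)=\langle k_n|\psi(t)\rangle$, let $\rho_A(t)=\mathrm{Tr}_B(|\psi(t)\rangle\langle\psi(t)|)$, $\rho_A^{(n)}=\mathrm{Tr}_B(|k_n\rangle\langle k_n|)$, and let $K=K(t)=\sum_{n}n|c_n(t)|^2$ be the spread complexity. Then for every time $t$, $$S(\rho_A(t))\le d_K\left[\sum_{n=0}^{d_K-1}|c_n(t)|^2\,S(\rho_A^{(n)})+f(K)\right],\qquad f(K)=(1+K)\log(1+K)-K\log K,$$ where $S(\rho)=-\mathrm{Tr}(\rho\log\rho)$ is the von Neumann entropy.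
   Context: Lanczos algorithm: set $|k_0\rangle=|\psi_0\rangle$, $b_0=0$, $|k_{-1}\rangle=0$; for $n\ge0$ set $a_n=\langle k_n|H|k_n\rangle$, $|v_{n+1}\rangle=H|k_n\rangle-a_n|k_n\rangle-b_n|k_{n-1}\rangle$, $b_{n+1}=\sqrt{\langle v_{n+1}|v_{n+1}\rangle}$, $|k_{n+1}\rangle=|v_{n+1}\rangle/b_{n+1}$; the algorithm terminates when $b_{n+1}=0$, and the resulting orthonormal vectors $|k_0\rangle,\dots,|k_{d_K-1}\rangle$ form the Krylov basis. All logarithms are taken in the same base (natural), with the convention $0\log 0=0$. *)

theory Defs
  imports "Jordan_Normal_Form.Schur_Decomposition"
    "HOL-Computational_Algebra.Fundamental_Theorem_Algebra"
begin

definition braket :: "complex vec \<Rightarrow> complex vec \<Rightarrow> complex" where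
  "braket v w = (\<Sum>i<dim_vec v. cnj (v $ i) * w $ i)"

definition hermitian_mat :: "complex mat \<Rightarrow> bool" where
  "hermitian_mat H \<longleftrightarrow> square_mat H \<and> mat_adjoint H = H"

definition mat_exp :: "complex mat \<Rightarrow> complex mat" where
  "mat_exp M = mat (dim_row M) (dim_col M)
     (\<lambda>(i,j). \<Sum>k. (M ^\<^sub>m k) $$ (i,j) / of_nat (fact k))"

(* Lanczos iteration: state n = (k_{n-1}, k_n, b_n), with k_{-1} = 0, b_0 = 0 *)
fun lanczos :: "complex mat \<Rightarrow> complex vec \<Rightarrow> nat \<Rightarrow> complex vec \<times> complex vec \<times> real" where
  "lanczos H psi0 0 = (0\<^sub>v (dim_vec psi0), psi0, 0)"
| "lanczos H psi0 (Suc n) =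
     (let (kp, kc, b) = lanczos H psi0 n;
          a = braket kc (H *\<^sub>v kc);
          v = H *\<^sub>v kc - a \<cdot>\<^sub>v kc - complex_of_real b \<cdot>\<^sub>v kp;
          b' = sqrt (Re (braket v v))
      in (kc, complex_of_real (1 / b') \<cdot>\<^sub>v v, b'))"

definition krylov_vec :: "complex mat \<Rightarrow> complex vec \<Rightarrow> nat \<Rightarrow> complex vec" where
  "krylov_vec H psi0 n = fst (snd (lanczos H psi0 n))"

definition lanczos_b :: "complex mat \<Rightarrow> complex vec \<Rightarrow> nat \<Rightarrow> real" where
  "lanczos_b H psi0 n = snd (snd (lanczos H psi0 n))"

(* Krylov dimension d_K: the algorithm terminates at the first n with b_{n+1} = 0,
   leaving the basis |k_0>, ..., |k_n>, so d_K = n + 1 *)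
definition krylov_dim :: "complex mat \<Rightarrow> complex vec \<Rightarrow> nat" where
  "krylov_dim H psi0 = Suc (LEAST n. lanczos_b H psi0 (Suc n) = 0)"

definition proj :: "complex vec \<Rightarrow> complex mat" where
  "proj v = mat (dim_vec v) (dim_vec v) (\<lambda>(i,j). v $ i * cnj (v $ j))"

(* Partial trace over B, for H_A \<otimes> H_B = C^dA \<otimes> C^dB \<cong> C^(dA*dB),
   basis |i> \<otimes> |j> identified with index i*dB + j *)
definition ptrace_B :: "nat \<Rightarrow> nat \<Rightarrow> complex mat \<Rightarrow> complex mat" where
  "ptrace_B dA dB M = mat dA dA (\<lambda>(i,i'). \<Sum>j<dB. M $$ (i*dB + j, i'*dB + j))"

definition xlogx :: "real \<Rightarrow> real" where
  "xlogx x = (if x = 0 then 0 else x * ln x)"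

(* von Neumann entropy S(rho) = -Tr(rho log rho) = - sum over eigenvalues (with multiplicity)
   of lambda log lambda; eigenvalues of a density matrix are real *)
definition vn_entropy :: "complex mat \<Rightarrow> real" where
  "vn_entropy rho = - (\<Sum>x\<in>#proots (char_poly rho). xlogx (Re x))"

definition f_K :: "real \<Rightarrow> real" where
  "f_K K = xlogx (1 + K) - xlogx K"

end

theory Submission
  imports Defs
begin

lemma braket_sum: "braket v w = (\<Sum>i<dim_vec v. cnj (v $ i) * w $ i)" by (simp add: braket_def)

lemma braket_add_right: "v \<in> carrier_vec n \<Longrightarrow> w1 \<in> carrier_vec n \<Longrightarrow> w2 \<in> carrier_vec n \<Longrightarrow>
  braket v (w1 + w2) = braket v w1 + braket v w2"
  by (auto simp: braket_def sum.distrib algebra_simps)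

lemma braket_minus_right: "v \<in> carrier_vec n \<Longrightarrow> w1 \<in> carrier_vec n \<Longrightarrow> w2 \<in> carrier_vec n \<Longrightarrow>
  braket v (w1 - w2) = braket v w1 - braket v w2"
  by (auto simp: braket_def sum_subtractf algebra_simps)

lemma braket_smult_right: "v \<in> carrier_vec n \<Longrightarrow> w \<in> carrier_vec n \<Longrightarrow>
  braket v (a \<cdot>\<^sub>v w) = a * braket v w"
  by (auto simp: braket_def sum_distrib_left algebra_simps)

lemma braket_smult_left: "v \<in> carrier_vec n \<Longrightarrow> w \<in> carrier_vec n \<Longrightarrow>
  braket (a \<cdot>\<^sub>v v) w = cnj a * braket v w"
  by (auto simp: braket_def sum_distrib_left algebra_simps)

lemma braket_add_left: "v1 \<in> carrier_vec n \<Longrightarrow> v2 \<in> carrier_vec n \<Longrightarrow> w \<in> carrier_vec n \<Longrightarrow>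
  braket (v1 + v2) w = braket v1 w + braket v2 w"
  by (auto simp: braket_def sum.distrib algebra_simps)

lemma braket_minus_left: "v1 \<in> carrier_vec n \<Longrightarrow> v2 \<in> carrier_vec n \<Longrightarrow> w \<in> carrier_vec n \<Longrightarrow>
  braket (v1 - v2) w = braket v1 w - braket v2 w"
  by (auto simp: braket_def sum_subtractf algebra_simps)

lemma braket_cnj: "v \<in> carrier_vec n \<Longrightarrow> w \<in> carrier_vec n \<Longrightarrow> cnj (braket v w) = braket w v"
  by (auto simp: braket_def mult.commute)

lemma braket_self: "braket v v = of_real (\<Sum>i<dim_vec v. (cmod (v $ i))\<^sup>2)"
proof -
  have "braket v v = (\<Sum>i<dim_vec v. of_real ((cmod (v $ i))\<^sup>2))"
    unfolding braket_def by (intro sum.cong refl) (metis complex_norm_square mult.commute)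
  then show ?thesis by simp
qed

lemma braket_self_Re: "Re (braket v v) = (\<Sum>i<dim_vec v. (cmod (v $ i))\<^sup>2)"
  by (simp add: braket_self)

lemma braket_self_real: "braket v v = of_real (Re (braket v v))"
  by (simp add: braket_self)

lemma braket_self_nonneg: "Re (braket v v) \<ge> 0"
  by (simp add: braket_self_Re sum_nonneg)

lemma braket_self_zero: assumes "v \<in> carrier_vec n" "braket v v = 0" shows "v = 0\<^sub>v n"
proof -
  have "(\<Sum>i<dim_vec v. (cmod (v $ i))\<^sup>2) = 0" using assms(2) braket_self_Re[of v] by simp
  then have "\<forall>i\<in>{..<dim_vec v}. (cmod (v $ i))\<^sup>2 = 0"
    by (subst sum_nonneg_eq_0_iff[symmetric]) auto
  then show ?thesis using assms(1) by (intro eq_vecI) auto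
qed

lemma braket_zero_right[simp]: "braket v (0\<^sub>v (dim_vec v)) = 0"
  by (simp add: braket_def)

lemma mult_mat_vec_sum: "A \<in> carrier_mat n m \<Longrightarrow> x \<in> carrier_vec m \<Longrightarrow> i < n \<Longrightarrow>
  (A *\<^sub>v x) $ i = (\<Sum>j<m. A $$ (i,j) * x $ j)"
  by (auto simp: scalar_prod_def row_def lessThan_atLeast0)

lemma hermitian_entry: "hermitian_mat A \<Longrightarrow> A \<in> carrier_mat n n \<Longrightarrow> i < n \<Longrightarrow> j < n \<Longrightarrow>
   A $$ (i,j) = cnj (A $$ (j,i))"
proof -
  assume h: "hermitian_mat A" and A: "A \<in> carrier_mat n n" and ij: "i < n" "j < n"
  have "mat_adjoint A $$ (i,j) = A $$ (i,j)" using h unfolding hermitian_mat_def by simp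
  moreover have "mat_adjoint A $$ (i,j) = cnj (A $$ (j,i))"
    using A ij unfolding mat_adjoint_def by (auto simp: mat_of_rows_def col_def)
  ultimately show ?thesis by simp
qed

lemma hermitian_braket: assumes "hermitian_mat A" "A \<in> carrier_mat n n" "x \<in> carrier_vec n" "y \<in> carrier_vec n"
  shows "braket x (A *\<^sub>v y) = braket (A *\<^sub>v x) y"
proof -
  have "braket x (A *\<^sub>v y) = (\<Sum>i<n. cnj (x $ i) * (\<Sum>j<n. A $$ (i,j) * y $ j))"
    unfolding braket_def using assms(3) by (intro sum.cong) (auto simp: mult_mat_vec_sum[OF assms(2,4)] simp del: index_mult_mat_vec)
  also have "\<dots> = (\<Sum>i<n. \<Sum>j<n. cnj (x $ i) * A $$ (i,j) * y $ j)"
    by (simp only: sum_distrib_left mult.assoc)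
  also have "\<dots> = (\<Sum>j<n. \<Sum>i<n. cnj (x $ i) * A $$ (i,j) * y $ j)" by (rule sum.swap)
  also have "\<dots> = (\<Sum>j<n. \<Sum>i<n. cnj (A $$ (j,i) * x $ i) * y $ j)"
  proof (intro sum.cong refl)
    fix i j assume "j \<in> {..<n}" "i \<in> {..<n}"
    then have "A $$ (i,j) = cnj (A $$ (j,i))" by (intro hermitian_entry[OF assms(1,2)]) auto
    then show "cnj (x $ i) * A $$ (i,j) * y $ j = cnj (A $$ (j,i) * x $ i) * y $ j" by simp
  qed
  also have "\<dots> = (\<Sum>j<n. cnj (\<Sum>i<n. A $$ (j,i) * x $ i) * y $ j)"
    by (simp only: cnj_sum sum_distrib_right)
  also have "\<dots> = braket (A *\<^sub>v x) y"
    unfolding braket_def using assms(2) by (intro sum.cong) (auto simp: mult_mat_vec_sum[OF assms(2,3)] simp del: index_mult_mat_vec)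
  finally show ?thesis .
qed

definition orthonormal :: "nat \<Rightarrow> (nat \<Rightarrow> complex vec) \<Rightarrow> bool" where
  "orthonormal k v \<longleftrightarrow> (\<forall>i<k. \<forall>j<k. braket (v i) (v j) = (if i = j then 1 else 0))"

lemma braket_lincomb_right:
  assumes "w \<in> carrier_vec n" "\<And>i. i \<in> I \<Longrightarrow> v i \<in> carrier_vec n"
  shows "braket w (vec n (\<lambda>a. \<Sum>i\<in>I. c i * v i $ a)) = (\<Sum>i\<in>I. c i * braket w (v i))"
proof -
  have "braket w (vec n (\<lambda>a. \<Sum>i\<in>I. c i * v i $ a)) = (\<Sum>a<n. \<Sum>i\<in>I. cnj (w $ a) * (c i * v i $ a))"
    using assms(1) by (simp add: braket_def sum_distrib_left)
  also have "\<dots> = (\<Sum>i\<in>I. \<Sum>a<n. c i * (cnj (w $ a) * v i $ a))"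
    by (subst sum.swap) (simp add: algebra_simps)
  also have "\<dots> = (\<Sum>i\<in>I. c i * braket w (v i))"
    using assms by (intro sum.cong refl) (simp add: braket_def sum_distrib_left)
  finally show ?thesis .
qed

lemma braket_lincomb_left:
  assumes "w \<in> carrier_vec n" "\<And>i. i \<in> I \<Longrightarrow> v i \<in> carrier_vec n"
  shows "braket (vec n (\<lambda>a. \<Sum>i\<in>I. c i * v i $ a)) w = (\<Sum>i\<in>I. cnj (c i) * braket (v i) w)"
proof -
  have "braket (vec n (\<lambda>a. \<Sum>i\<in>I. c i * v i $ a)) w = (\<Sum>a<n. \<Sum>i\<in>I. cnj (c i) * (cnj (v i $ a) * w $ a))"
    using assms(1) by (simp add: braket_def sum_distrib_left sum_distrib_right ac_simps)
  also have "\<dots> = (\<Sum>i\<in>I. \<Sum>a<n. cnj (c i) * (cnj (v i $ a) * w $ a))"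
    by (subst sum.swap) simp
  also have "\<dots> = (\<Sum>i\<in>I. cnj (c i) * braket (v i) w)"
  proof (intro sum.cong refl)
    fix i assume "i \<in> I"
    then have "dim_vec (v i) = n" using assms(2) by auto
    then show "(\<Sum>a<n. cnj (c i) * (cnj (v i $ a) * w $ a)) = cnj (c i) * braket (v i) w"
      by (simp add: braket_def sum_distrib_left)
  qed
  finally show ?thesis .
qed

lemma orthonormal_sum_delta:
  assumes "orthonormal k v" "j < k"
  shows "(\<Sum>i<k. c i * braket (v j) (v i)) = c j"
proof -
  have "(\<Sum>i<k. c i * braket (v j) (v i)) = (\<Sum>i<k. if i = j then c i else 0)"
    using assms unfolding orthonormal_def by (intro sum.cong) auto
  also have "\<dots> = c j" using assms(2) by simp
  finally show ?thesis .
qed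

definition projm :: "nat \<Rightarrow> nat \<Rightarrow> (nat \<Rightarrow> complex vec) \<Rightarrow> complex mat" where
  "projm n k v = mat n n (\<lambda>(a,b). \<Sum>i<k. v i $ a * cnj (v i $ b))"

lemma projm_carrier[simp]: "projm n k v \<in> carrier_mat n n"
  by (simp add: projm_def)

lemma projm_mult:
  assumes "x \<in> carrier_vec n" "\<And>i. i < k \<Longrightarrow> v i \<in> carrier_vec n"
  shows "projm n k v *\<^sub>v x = vec n (\<lambda>a. \<Sum>i<k. braket (v i) x * v i $ a)"
proof (rule eq_vecI)
  fix a assume a: "a < dim_vec (vec n (\<lambda>a. \<Sum>i<k. braket (v i) x * v i $ a))"
  then have an: "a < n" by simp
  have "(projm n k v *\<^sub>v x) $ a = (\<Sum>b<n. projm n k v $$ (a,b) * x $ b)"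
    by (rule mult_mat_vec_sum[OF projm_carrier assms(1) an])
  also have "\<dots> = (\<Sum>b<n. (\<Sum>i<k. v i $ a * cnj (v i $ b)) * x $ b)"
    using an by (intro sum.cong) (auto simp: projm_def)
  also have "\<dots> = (\<Sum>i<k. \<Sum>b<n. v i $ a * (cnj (v i $ b) * x $ b))"
    by (simp add: sum_distrib_left sum_distrib_right ac_simps) (rule sum.swap)
  also have "\<dots> = (\<Sum>i<k. braket (v i) x * v i $ a)"
  proof (intro sum.cong refl)
    fix i assume "i \<in> {..<k}"
    then have "dim_vec (v i) = n" using assms(2) by auto
    then show "(\<Sum>b<n. v i $ a * (cnj (v i $ b) * x $ b)) = braket (v i) x * v i $ a"
      by (simp add: braket_def sum_distrib_left sum_distrib_right ac_simps)
  qed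
  finally show "(projm n k v *\<^sub>v x) $ a = vec n (\<lambda>a. \<Sum>i<k. braket (v i) x * v i $ a) $ a"
    using an by simp
qed (simp add: projm_def)

lemma braket_projm:
  assumes "x \<in> carrier_vec n" "\<And>i. i < k \<Longrightarrow> v i \<in> carrier_vec n" "orthonormal k v" "j < k"
  shows "braket (v j) (projm n k v *\<^sub>v x) = braket (v j) x"
proof -
  have "braket (v j) (projm n k v *\<^sub>v x) = braket (v j) (vec n (\<lambda>a. \<Sum>i<k. braket (v i) x * v i $ a))"
    using projm_mult[OF assms(1,2)] by simp
  also have "\<dots> = (\<Sum>i<k. braket (v i) x * braket (v j) (v i))"
    by (rule braket_lincomb_right[of "v j" n "{..<k}" v "\<lambda>i. braket (v i) x"]) (use assms in auto)
  also have "\<dots> = braket (v j) x" by (rule orthonormal_sum_delta[OF assms(3,4)])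
  finally show ?thesis .
qed

definition mtr :: "complex mat \<Rightarrow> complex" where
  "mtr M = (\<Sum>i<dim_row M. M $$ (i,i))"

lemma mtr_mult_comm: assumes "A \<in> carrier_mat n m" "B \<in> carrier_mat m n"
  shows "mtr (A * B) = mtr (B * A)"
proof -
  have "mtr (A * B) = (\<Sum>i<n. \<Sum>j<m. A $$ (i,j) * B $$ (j,i))"
    using assms unfolding mtr_def by (intro sum.cong) (auto simp: scalar_prod_def lessThan_atLeast0)
  also have "\<dots> = (\<Sum>j<m. \<Sum>i<n. B $$ (j,i) * A $$ (i,j))"
    by (subst sum.swap) (simp add: mult.commute)
  also have "\<dots> = mtr (B * A)"
    using assms unfolding mtr_def by (intro sum.cong) (auto simp: scalar_prod_def lessThan_atLeast0)
  finally show ?thesis .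
qed

lemma mtr_similar: assumes "similar_mat_wit C B P Q" "C \<in> carrier_mat n n"
  shows "mtr C = mtr B"
proof -
  note s = similar_mat_witD2[OF assms(2,1)]
  have "mtr C = mtr (P * B * Q)" using s by simp
  also have "\<dots> = mtr (Q * (P * B))" using s by (intro mtr_mult_comm[of _ n n]) auto
  also have "Q * (P * B) = (Q * P) * B" by (rule assoc_mult_mat[symmetric]) (use s in auto)
  also have "\<dots> = B" using s by simp
  finally show ?thesis .
qed

lemma mtr_add: "A \<in> carrier_mat n n \<Longrightarrow> B \<in> carrier_mat n n \<Longrightarrow> mtr (A + B) = mtr A + mtr B"
  by (simp add: mtr_def sum.distrib)

lemma mtr_smult: "A \<in> carrier_mat n n \<Longrightarrow> mtr (c \<cdot>\<^sub>m A) = c * mtr A"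
  by (simp add: mtr_def sum_distrib_left)

lemma mtr_diag: "mtr B = sum_list (diag_mat B)"
  by (simp add: mtr_def diag_mat_def sum_list_sum_nth lessThan_atLeast0)

lemma mtr_projm: assumes "orthonormal k v" "\<And>i. i < k \<Longrightarrow> v i \<in> carrier_vec n"
  shows "mtr (projm n k v) = of_nat k"
proof -
  have "mtr (projm n k v) = (\<Sum>a<n. \<Sum>i<k. v i $ a * cnj (v i $ a))"
    by (simp add: mtr_def projm_def)
  also have "\<dots> = (\<Sum>i<k. braket (v i) (v i))"
  proof (subst sum.swap, intro sum.cong refl)
    fix i assume "i \<in> {..<k}"
    then have "dim_vec (v i) = n" using assms(2) by auto
    then show "(\<Sum>a<n. v i $ a * cnj (v i $ a)) = braket (v i) (v i)"
      by (simp add: braket_def mult.commute)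
  qed
  also have "\<dots> = (\<Sum>i<k. 1)" using assms(1) unfolding orthonormal_def by simp
  finally show ?thesis by simp
qed

lemma smult_mat_mult_vec: "A \<in> carrier_mat n m \<Longrightarrow> x \<in> carrier_vec m \<Longrightarrow> (c \<cdot>\<^sub>m A) *\<^sub>v x = c \<cdot>\<^sub>v (A *\<^sub>v x)"
  by (intro eq_vecI) (auto simp: scalar_prod_def sum_distrib_left algebra_simps)

lemma spectral_step:
  assumes A: "A \<in> carrier_mat n n" and h: "hermitian_mat A" and kn: "k < n"
    and vc: "\<And>i. i < k \<Longrightarrow> v i \<in> carrier_vec n" and on: "orthonormal k v"
    and ev: "\<And>i. i < k \<Longrightarrow> A *\<^sub>v v i = complex_of_real (lam i) \<cdot>\<^sub>v v i"
  shows "\<exists>u \<mu>. u \<in> carrier_vec n \<and> braket u u = 1 \<and> (\<forall>j<k. braket (v j) u = 0) \<and>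
     A *\<^sub>v u = complex_of_real \<mu> \<cdot>\<^sub>v u"
proof -
  define P where "P = projm n k v"
  define Q where "Q = 1\<^sub>m n - P"
  define M where "M = Q * A * Q"
  have P: "P \<in> carrier_mat n n" unfolding P_def by simp
  have Q: "Q \<in> carrier_mat n n" unfolding Q_def using P by (simp add: minus_carrier_mat)
  have M: "M \<in> carrier_mat n n" unfolding M_def using Q A by simp
  define T where "T = mtr M"
  define c where "c = T / of_nat (n-k) + 1"
  define C where "C = M + c \<cdot>\<^sub>m P"
  have C: "C \<in> carrier_mat n n" unfolding C_def using M P by simp
  have Qy: "Q *\<^sub>v y = y - P *\<^sub>v y" if "y \<in> carrier_vec n" for y
    unfolding Q_def using that P by (simp add: minus_mult_distrib_mat_vec[of _ n n])
  have bQ: "braket (v j) (Q *\<^sub>v y) = 0" if "y \<in> carrier_vec n" "j < k" for y j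
  proof -
    have "braket (v j) (Q *\<^sub>v y) = braket (v j) y - braket (v j) (P *\<^sub>v y)"
      unfolding Qy[OF that(1)] by (rule braket_minus_right[of _ n]) (use that vc P in auto)
    then show ?thesis unfolding P_def using braket_projm[OF that(1) vc on that(2)] by simp
  qed
  have Cx: "C *\<^sub>v x = Q *\<^sub>v (A *\<^sub>v (Q *\<^sub>v x)) + c \<cdot>\<^sub>v (P *\<^sub>v x)" if "x \<in> carrier_vec n" for x
  proof -
    have "C *\<^sub>v x = M *\<^sub>v x + (c \<cdot>\<^sub>m P) *\<^sub>v x" unfolding C_def
      using M P that by (simp add: add_mult_distrib_mat_vec[of _ n n])
    also have "M *\<^sub>v x = Q *\<^sub>v (A *\<^sub>v (Q *\<^sub>v x))"
    proof -
      have "M *\<^sub>v x = (Q * A) *\<^sub>v (Q *\<^sub>v x)" unfolding M_def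
        by (rule assoc_mult_mat_vec[of _ n n _ n]) (use Q A that in auto)
      also have "\<dots> = Q *\<^sub>v (A *\<^sub>v (Q *\<^sub>v x))"
        by (rule assoc_mult_mat_vec[of _ n n _ n]) (use Q A that in auto)
      finally show ?thesis .
    qed
    also have "(c \<cdot>\<^sub>m P) *\<^sub>v x = c \<cdot>\<^sub>v (P *\<^sub>v x)" using P that by (rule smult_mat_mult_vec)
    finally show ?thesis .
  qed
  have ex: "\<exists>\<mu>. eigenvalue C \<mu> \<and> \<mu> \<noteq> c"
  proof (rule ccontr)
    assume "\<not> ?thesis"
    then have all: "\<And>\<mu>. eigenvalue C \<mu> \<Longrightarrow> \<mu> = c" by blast
    obtain as where cp: "char_poly C = (\<Prod>a\<leftarrow>as. [:- a, 1:])" and las: "length as = n"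
      using char_poly_factorized[OF C] by blast
    have asc: "a = c" if "a \<in> set as" for a
    proof -
      have "poly (char_poly C) a = 0" unfolding cp poly_prod_list
        using that by (auto simp: prod_list_zero_iff)
      then show ?thesis using all eigenvalue_root_char_poly[OF C] by blast
    qed
    then have asr: "as = replicate n c" using las by (metis replicate_length_same)
    obtain B P' Q' where sd: "schur_decomposition C as = (B,P',Q')" by (cases "schur_decomposition C as") auto
    from schur_decomposition[OF C cp sd] have sim: "similar_mat_wit C B P' Q'" and dg: "diag_mat B = as"
      by auto
    have "mtr C = mtr B" by (rule mtr_similar[OF sim C])
    also have "\<dots> = of_nat n * c" unfolding mtr_diag dg asr by (rule sum_list_replicate)
    finally have e1: "mtr C = of_nat n * c" .
    have "mtr C = T + c * of_nat k" unfolding C_def T_def using M P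
      by (simp add: mtr_add[of _ n] mtr_smult[of _ n] P_def mtr_projm[OF on vc])
    with e1 have "(of_nat n - of_nat k) * c = T" by (simp add: algebra_simps)
    moreover have d0: "(of_nat n - of_nat k :: complex) \<noteq> 0" using kn by simp
    moreover have "of_nat (n - k) = (of_nat n - of_nat k :: complex)" using kn by simp
    ultimately have "(of_nat n - of_nat k) * (T / (of_nat n - of_nat k) + 1) = T" unfolding c_def by simp
    then have "T + (of_nat n - of_nat k) = T" using d0 by (simp add: distrib_left)
    then show False using d0 by simp
  qed
  then obtain \<mu> where "eigenvalue C \<mu>" and muc: "\<mu> \<noteq> c" by blast
  then obtain x where "eigenvector C x \<mu>" unfolding eigenvalue_def by blast
  then have x: "x \<in> carrier_vec n" and x0: "x \<noteq> 0\<^sub>v n" and Cxe: "C *\<^sub>v x = \<mu> \<cdot>\<^sub>v x"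
    unfolding eigenvector_def using C by auto
  have orth: "braket (v j) x = 0" if j: "j < k" for j
  proof -
    have "braket (v j) (C *\<^sub>v x) = c * braket (v j) x"
      unfolding Cx[OF x] using x Q A P j vc
      by (simp add: braket_add_right[of _ n] braket_smult_right[of _ n] bQ
          braket_projm[OF x vc on j, folded P_def])
    moreover have "braket (v j) (C *\<^sub>v x) = \<mu> * braket (v j) x"
      unfolding Cxe using x j vc by (simp add: braket_smult_right[of _ n])
    ultimately have "(\<mu> - c) * braket (v j) x = 0" by (simp add: algebra_simps)
    then show ?thesis using muc by simp
  qed
  have Pxe: "P *\<^sub>v x = vec n (\<lambda>a. \<Sum>i<k. braket (v i) x * v i $ a)"
    unfolding P_def by (rule projm_mult[OF x vc])
  have Px: "P *\<^sub>v x = 0\<^sub>v n" unfolding Pxe using orth by (intro eq_vecI) auto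
  have QX: "Q *\<^sub>v x = x" using Qy[OF x] Px x by simp
  have Ax: "A *\<^sub>v x \<in> carrier_vec n" using A x by simp
  have PAx: "P *\<^sub>v (A *\<^sub>v x) = 0\<^sub>v n"
  proof -
    have "braket (v i) (A *\<^sub>v x) = 0" if i: "i < k" for i
    proof -
      have "braket (v i) (A *\<^sub>v x) = braket (A *\<^sub>v v i) x" by (rule hermitian_braket[OF h A vc[OF i] x])
      also have "\<dots> = 0" unfolding ev[OF i] using i vc x orth by (simp add: braket_smult_left[of _ n])
      finally show ?thesis .
    qed
    moreover have "P *\<^sub>v (A *\<^sub>v x) = vec n (\<lambda>a. \<Sum>i<k. braket (v i) (A *\<^sub>v x) * v i $ a)"
      unfolding P_def by (rule projm_mult[OF Ax vc])
    ultimately show ?thesis by (intro eq_vecI) auto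
  qed
  have AX: "A *\<^sub>v x = \<mu> \<cdot>\<^sub>v x"
  proof -
    have "C *\<^sub>v x = A *\<^sub>v x" unfolding Cx[OF x] QX Qy[OF Ax] PAx Px using Ax A by (simp, intro eq_vecI, auto)
    then show ?thesis using Cxe by simp
  qed
  define r where "r = Re (braket x x)"
  have bxr: "braket x x = of_real r" unfolding r_def by (rule braket_self_real)
  have r0: "r > 0"
  proof -
    have "r \<ge> 0" unfolding r_def by (rule braket_self_nonneg)
    moreover have "r \<noteq> 0" using braket_self_zero[OF x] x0 bxr by auto
    ultimately show ?thesis by simp
  qed
  have mureal: "\<mu> = of_real (Re \<mu>)"
  proof -
    have "braket x (A *\<^sub>v x) = braket (A *\<^sub>v x) x" by (rule hermitian_braket[OF h A x x])
    then have "\<mu> * braket x x = cnj \<mu> * braket x x" unfolding AX using x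
      by (simp add: braket_smult_left[of _ n] braket_smult_right[of _ n])
    then have "\<mu> = cnj \<mu>" using r0 bxr by simp
    then show ?thesis by (metis Reals_cnj_iff complex_is_Real_iff of_real_Re)
  qed
  define s where "s = 1 / sqrt r"
  define u where "u = complex_of_real s \<cdot>\<^sub>v x"
  have u: "u \<in> carrier_vec n" unfolding u_def using x by simp
  have "braket u u = complex_of_real (s * s * r)" unfolding u_def using x
    by (simp add: braket_smult_left[of _ n] braket_smult_right[of _ n] bxr)
  also have "s * s * r = 1" unfolding s_def using r0 by (simp add: real_sqrt_mult[symmetric])
  finally have uu: "braket u u = 1" by simp
  have uo: "\<forall>j<k. braket (v j) u = 0" unfolding u_def using x vc orth
    by (simp add: braket_smult_right[of _ n])
  have "A *\<^sub>v u = complex_of_real (Re \<mu>) \<cdot>\<^sub>v u" unfolding u_def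
    using A x by (simp add: mult_mat_vec[of _ n n] AX smult_smult_assoc mult.commute flip: mureal)
  with u uu uo show ?thesis by blast
qed

lemma spectral_aux:
  assumes A: "A \<in> carrier_mat n n" and h: "hermitian_mat A"
  shows "k \<le> n \<Longrightarrow> \<exists>v lam. (\<forall>i<k. v i \<in> carrier_vec n) \<and> orthonormal k v \<and>
      (\<forall>i<k. A *\<^sub>v v i = complex_of_real (lam i) \<cdot>\<^sub>v v i)"
proof (induction k)
  case 0
  then show ?case by (auto simp: orthonormal_def)
next
  case (Suc k)
  then obtain v lam where vc: "\<forall>i<k. v i \<in> carrier_vec n" and on: "orthonormal k v"
    and ev: "\<forall>i<k. A *\<^sub>v v i = complex_of_real (lam i) \<cdot>\<^sub>v v i" by auto
  obtain u \<mu> where u: "u \<in> carrier_vec n" and uu: "braket u u = 1" and uo: "\<forall>j<k. braket (v j) u = 0"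
    and Au: "A *\<^sub>v u = complex_of_real \<mu> \<cdot>\<^sub>v u"
    using spectral_step[OF A h _ _ on, of lam] vc ev Suc.prems by auto
  define v' where "v' = v(k := u)"
  define lam' where "lam' = lam(k := \<mu>)"
  have "\<forall>i<Suc k. v' i \<in> carrier_vec n" using vc u unfolding v'_def by (auto simp: less_Suc_eq)
  moreover have "orthonormal (Suc k) v'"
    unfolding orthonormal_def
  proof (intro allI impI)
    fix i j assume i: "i < Suc k" and j: "j < Suc k"
    show "braket (v' i) (v' j) = (if i = j then 1 else 0)"
    proof (cases "i = k")
      case True
      show ?thesis
      proof (cases "j = k")
        case True
        then show ?thesis using \<open>i = k\<close> uu by (simp add: v'_def)
      next
        case False
        then have "j < k" using j by simp
        then have "braket u (v j) = cnj (braket (v j) u)" using vc u by (simp add: braket_cnj[of _ n])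
        then show ?thesis using \<open>i = k\<close> False uo \<open>j < k\<close> by (simp add: v'_def)
      qed
    next
      case False
      then have ik: "i < k" using i by simp
      show ?thesis
      proof (cases "j = k")
        case True
        then show ?thesis using ik uo by (simp add: v'_def)
      next
        case False
        then show ?thesis using ik j on \<open>i \<noteq> k\<close> unfolding orthonormal_def by (simp add: v'_def)
      qed
    qed
  qed
  moreover have "\<forall>i<Suc k. A *\<^sub>v v' i = complex_of_real (lam' i) \<cdot>\<^sub>v v' i"
    using ev Au unfolding v'_def lam'_def by (auto simp: less_Suc_eq)
  ultimately show ?case by blast
qed

lemma spectral:
  assumes A: "A \<in> carrier_mat n n" and h: "hermitian_mat A"
  shows "\<exists>v lam. (\<forall>i<n. v i \<in> carrier_vec n) \<and> orthonormal n v \<and>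
      (\<forall>i<n. A *\<^sub>v v i = complex_of_real (lam i) \<cdot>\<^sub>v v i)"
  using spectral_aux[OF A h, of n] by simp

locale onb =
  fixes n :: nat and v :: "nat \<Rightarrow> complex vec"
  assumes vc: "\<And>i. i < n \<Longrightarrow> v i \<in> carrier_vec n"
    and on: "orthonormal n v"
begin

definition U where "U = mat n n (\<lambda>(a,i). v i $ a)"
definition U' where "U' = mat n n (\<lambda>(i,a). cnj (v i $ a))"

lemma U: "U \<in> carrier_mat n n" and U': "U' \<in> carrier_mat n n"
  by (auto simp: U_def U'_def)

lemma vdim: "i < n \<Longrightarrow> dim_vec (v i) = n" using vc by auto

lemma U'U: "U' * U = 1\<^sub>m n"
proof (rule eq_matI)
  fix i j assume ij: "i < dim_row (1\<^sub>m n)" "j < dim_col (1\<^sub>m n)"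
  then have "(U' * U) $$ (i,j) = (\<Sum>a<n. cnj (v i $ a) * v j $ a)"
    by (simp add: U_def U'_def scalar_prod_def lessThan_atLeast0 row_def col_def)
  also have "\<dots> = braket (v i) (v j)" using ij by (simp add: braket_def vdim)
  also have "\<dots> = 1\<^sub>m n $$ (i,j)" using on ij unfolding orthonormal_def by simp
  finally show "(U' * U) $$ (i,j) = 1\<^sub>m n $$ (i,j)" .
qed (auto simp: U_def U'_def)

lemma UU': "U * U' = 1\<^sub>m n"
  by (rule mat_mult_left_right_inverse[OF U' U U'U])

lemma complete: "a < n \<Longrightarrow> b < n \<Longrightarrow> (\<Sum>i<n. v i $ a * cnj (v i $ b)) = (if a = b then 1 else 0)"
proof -
  assume ab: "a < n" "b < n"
  have "(U * U') $$ (a,b) = (\<Sum>i<n. v i $ a * cnj (v i $ b))"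
    using ab by (simp add: U_def U'_def scalar_prod_def lessThan_atLeast0 row_def col_def)
  then show ?thesis using UU' ab by simp
qed

lemma expand: assumes x: "x \<in> carrier_vec n"
  shows "x = vec n (\<lambda>a. \<Sum>i<n. braket (v i) x * v i $ a)"
proof (rule eq_vecI)
  fix a assume "a < dim_vec (vec n (\<lambda>a. \<Sum>i<n. braket (v i) x * v i $ a))"
  then have a: "a < n" by simp
  have "(\<Sum>i<n. braket (v i) x * v i $ a) = (\<Sum>i<n. \<Sum>b<n. x $ b * (v i $ a * cnj (v i $ b)))"
    by (intro sum.cong refl) (simp add: braket_def vdim sum_distrib_left sum_distrib_right ac_simps)
  also have "\<dots> = (\<Sum>b<n. x $ b * (\<Sum>i<n. v i $ a * cnj (v i $ b)))"
    by (subst sum.swap) (simp add: sum_distrib_left)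
  also have "\<dots> = (\<Sum>b<n. if b = a then x $ b else 0)"
    using a by (intro sum.cong refl) (simp add: complete)
  also have "\<dots> = x $ a" using a by simp
  finally show "x $ a = vec n (\<lambda>a. \<Sum>i<n. braket (v i) x * v i $ a) $ a" using a by simp
qed (use x in simp)

lemma parseval: assumes x: "x \<in> carrier_vec n" "y \<in> carrier_vec n"
  shows "braket x y = (\<Sum>i<n. cnj (braket (v i) x) * braket (v i) y)"
proof -
  have "braket x y = braket (vec n (\<lambda>a. \<Sum>i<n. braket (v i) x * v i $ a)) y"
    using expand[OF x(1)] by simp
  also have "\<dots> = (\<Sum>i<n. cnj (braket (v i) x) * braket (v i) y)"
    by (rule braket_lincomb_left[OF x(2)]) (use vc in auto)
  finally show ?thesis .
qed

end

lemma proots_linear_prod: "proots (\<Prod>i\<leftarrow>xs. [:- c i, 1:]) = mset (map c xs)"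
proof (induction xs)
  case Nil
  then show ?case by simp
next
  case (Cons a xs)
  have nz: "(\<Prod>i\<leftarrow>xs. [:- c i, 1:]) \<noteq> 0"
    by (auto simp: prod_list_zero_iff)
  have "proots (\<Prod>i\<leftarrow>a # xs. [:- c i, 1:]) = proots ([:- c a, 1:] * (\<Prod>i\<leftarrow>xs. [:- c i, 1:]))" by simp
  also have "\<dots> = proots [:- c a, 1:] + proots (\<Prod>i\<leftarrow>xs. [:- c i, 1:])"
    by (rule proots_mult) (use nz in auto)
  also have "\<dots> = {#c a#} + mset (map c xs)" using Cons.IH by simp
  finally show ?case by simp
qed

locale eigsys = onb +
  fixes A :: "complex mat" and lam :: "nat \<Rightarrow> real"
  assumes A: "A \<in> carrier_mat n n"
    and ev: "\<And>i. i < n \<Longrightarrow> A *\<^sub>v v i = complex_of_real (lam i) \<cdot>\<^sub>v v i"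
begin

lemma entries: assumes ab: "a < n" "b < n"
  shows "A $$ (a,b) = (\<Sum>i<n. complex_of_real (lam i) * v i $ a * cnj (v i $ b))"
proof -
  have "(\<Sum>c<n. A $$ (a,c) * (if c = b then 1 else 0)) = (\<Sum>c<n. if c = b then A $$ (a,c) else 0)"
    by (intro sum.cong) auto
  then have "A $$ (a,b) = (\<Sum>c<n. A $$ (a,c) * (if c = b then 1 else 0))" using ab by simp
  also have "\<dots> = (\<Sum>c<n. A $$ (a,c) * (\<Sum>i<n. v i $ c * cnj (v i $ b)))"
    using ab by (intro sum.cong refl) (simp add: complete)
  also have "\<dots> = (\<Sum>i<n. (\<Sum>c<n. A $$ (a,c) * v i $ c) * cnj (v i $ b))"
    by (simp add: sum_distrib_left sum_distrib_right ac_simps) (rule sum.swap)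
  also have "\<dots> = (\<Sum>i<n. (A *\<^sub>v v i) $ a * cnj (v i $ b))"
    using ab vc by (intro sum.cong refl) (simp add: mult_mat_vec_sum[OF A] del: index_mult_mat_vec)
  also have "\<dots> = (\<Sum>i<n. complex_of_real (lam i) * v i $ a * cnj (v i $ b))"
    using ab vc by (intro sum.cong refl) (simp add: ev vdim)
  finally show ?thesis .
qed

definition D where "D = mat n n (\<lambda>(i,j). if i = j then complex_of_real (lam i) else 0)"

lemma decomp: "A = U * D * U'"
proof (rule eq_matI)
  fix a b assume ab: "a < dim_row (U * D * U')" "b < dim_col (U * D * U')"
  then have ab': "a < n" "b < n" by (auto simp: U_def U'_def D_def)
  have UD: "(U * D) $$ (a,i) = v i $ a * complex_of_real (lam i)" if "i < n" for i
  proof -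
    have "(U * D) $$ (a,i) = (\<Sum>j=0..<n. v j $ a * (if j = i then complex_of_real (lam j) else 0))"
      using that ab' by (simp add: U_def D_def scalar_prod_def row_def col_def)
    also have "\<dots> = (\<Sum>j<n. if j = i then v i $ a * complex_of_real (lam i) else 0)"
      unfolding lessThan_atLeast0 by (intro sum.cong) auto
    also have "\<dots> = v i $ a * complex_of_real (lam i)"
      using that by simp
    finally show ?thesis .
  qed
  have "(U * D * U') $$ (a,b) = (\<Sum>i<n. (U * D) $$ (a,i) * cnj (v i $ b))"
    using ab' by (simp add: U_def U'_def D_def scalar_prod_def lessThan_atLeast0 row_def col_def)
  also have "\<dots> = (\<Sum>i<n. complex_of_real (lam i) * v i $ a * cnj (v i $ b))"
    by (intro sum.cong refl) (simp add: UD)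
  also have "\<dots> = A $$ (a,b)" using entries[OF ab'] by simp
  finally show "A $$ (a,b) = (U * D * U') $$ (a,b)" by simp
qed (use A in \<open>auto simp: U_def U'_def D_def\<close>)

lemma char_poly_eig: "char_poly A = (\<Prod>i\<leftarrow>[0..<n]. [:- complex_of_real (lam i), 1:])"
proof -
  have Dc: "D \<in> carrier_mat n n" by (simp add: D_def)
  have "similar_mat_wit A D U U'"
    by (rule similar_mat_witI[OF UU' U'U decomp A Dc U U'])
  then have "similar_mat A D" unfolding similar_mat_def by blast
  then have "char_poly A = char_poly D" by (rule char_poly_similar)
  also have "\<dots> = (\<Prod>a\<leftarrow>diag_mat D. [:- a, 1:])"
    by (rule char_poly_upper_triangular[OF Dc]) (auto simp: upper_triangular_def D_def)
  also have "diag_mat D = map (\<lambda>i. complex_of_real (lam i)) [0..<n]"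
    by (simp add: diag_mat_def D_def)
  finally show ?thesis by (simp add: comp_def)
qed

lemma proots_eig: "proots (char_poly A) = mset (map (\<lambda>i. complex_of_real (lam i)) [0..<n])"
  unfolding char_poly_eig by (rule proots_linear_prod)

lemma vn_entropy_eig: "vn_entropy A = - (\<Sum>i<n. xlogx (lam i))"
proof -
  have "(\<Sum>x\<in>#proots (char_poly A). xlogx (Re x)) = (\<Sum>x\<leftarrow>map (\<lambda>i. complex_of_real (lam i)) [0..<n]. xlogx (Re x))"
    unfolding proots_eig by (simp only: mset_map[symmetric] sum_mset_sum_list)
  also have "\<dots> = (\<Sum>i<n. xlogx (lam i))" by (simp add: sum_list_sum_nth lessThan_atLeast0 comp_def)
  finally show ?thesis unfolding vn_entropy_def by simp
qed

end

lemma xlogx_nonneg_arg: "x > 0 \<Longrightarrow> xlogx x = x * ln x" by (simp add: xlogx_def)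

lemma ln_le_minus_one': "(x::real) > 0 \<Longrightarrow> ln x \<le> x - 1"
  by (rule ln_le_minus_one)

lemma classical_a:
  fixes r s :: "nat \<Rightarrow> real" and U :: "nat \<Rightarrow> nat \<Rightarrow> real" and d :: real
  assumes r0: "\<And>i. i < m \<Longrightarrow> r i \<ge> 0" and s0: "\<And>j. j < m \<Longrightarrow> s j \<ge> 0"
    and rs: "(\<Sum>i<m. r i) = 1" and ss: "(\<Sum>j<m. s j) = 1"
    and U0: "\<And>i j. i < m \<Longrightarrow> j < m \<Longrightarrow> U i j \<ge> 0"
    and Ur: "\<And>i. i < m \<Longrightarrow> (\<Sum>j<m. U i j) = 1"
    and Uc: "\<And>j. j < m \<Longrightarrow> (\<Sum>i<m. U i j) = 1"
    and dom: "\<And>j. j < m \<Longrightarrow> (\<Sum>i<m. r i * U i j) \<le> d * s j"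
  shows "- (\<Sum>i<m. xlogx (r i)) \<le> d * - (\<Sum>j<m. xlogx (s j))"
proof -
  define T where "T i j = (if r i * U i j > 0 then r i * U i j * (ln (s j) - ln (r i)) else 0)" for i j
  define L where "L i j = (if r i * U i j > 0 then r i * U i j * ln (s j) else 0)" for i j
  define R where "R i j = (if r i * U i j > 0 then r i * U i j * ln (r i) else 0)" for i j
  have spos: "s j > 0" if "i < m" "j < m" "r i * U i j > 0" for i j
  proof (rule ccontr)
    assume "\<not> s j > 0"
    then have "s j = 0" using s0 that by force
    have "r i * U i j \<le> (\<Sum>i<m. r i * U i j)"
      using that r0 U0 by (intro member_le_sum) auto
    also have "\<dots> \<le> 0" using dom[OF that(2)] \<open>s j = 0\<close> by simp
    finally show False using that by simp
  qed
  have T_le: "T i j \<le> U i j * s j - r i * U i j" if "i < m" "j < m" for i j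
  proof (cases "r i * U i j > 0")
    case True
    have "r i \<ge> 0" "U i j \<ge> 0" using r0[of i] U0[of i j] that by auto
    then have ri: "r i > 0" and Uij: "U i j > 0" using True
      by (auto simp: zero_less_mult_iff)
    have sj: "s j > 0" using spos[OF that True] .
    have "ln (s j) - ln (r i) = ln (s j / r i)" using ri sj by (simp add: ln_div)
    also have "\<dots> \<le> s j / r i - 1" using ri sj by (intro ln_le_minus_one') simp
    finally have "r i * U i j * (ln (s j) - ln (r i)) \<le> r i * U i j * (s j / r i - 1)"
      using True by (intro mult_left_mono) auto
    also have "\<dots> = U i j * s j - r i * U i j" using ri by (simp add: field_simps)
    finally show ?thesis unfolding T_def using True by simp
  next
    case False
    have "r i \<ge> 0" "U i j \<ge> 0" using r0[of i] U0[of i j] that by auto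
    then have "r i * U i j = 0" using False mult_nonneg_nonneg[of "r i" "U i j"] by linarith
    moreover have "U i j * s j \<ge> 0" using U0[of i j] s0[of j] that by simp
    ultimately show ?thesis unfolding T_def using False by simp
  qed
  have sumT: "(\<Sum>i<m. \<Sum>j<m. T i j) \<le> 0"
  proof -
    have "(\<Sum>i<m. \<Sum>j<m. T i j) \<le> (\<Sum>i<m. \<Sum>j<m. U i j * s j - r i * U i j)"
      by (intro sum_mono T_le) auto
    also have "\<dots> = (\<Sum>j<m. \<Sum>i<m. U i j * s j) - (\<Sum>i<m. r i * (\<Sum>j<m. U i j))"
      by (simp add: sum_subtractf sum_distrib_left) (rule sum.swap)
    also have "(\<Sum>j<m. \<Sum>i<m. U i j * s j) = (\<Sum>j<m. s j)"
      by (intro sum.cong refl) (simp add: sum_distrib_right[symmetric] Uc)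
    also have "(\<Sum>i<m. r i * (\<Sum>j<m. U i j)) = (\<Sum>i<m. r i)"
      by (intro sum.cong refl) (simp add: Ur)
    finally show ?thesis using rs ss by simp
  qed
  have xr: "xlogx (r i) = (\<Sum>j<m. R i j)" if i: "i < m" for i
  proof (cases "r i > 0")
    case True
    have "(\<Sum>j<m. R i j) = (\<Sum>j<m. r i * U i j * ln (r i))"
      unfolding R_def using True U0 i by (intro sum.cong refl) (auto simp: zero_less_mult_iff order_less_le)
    also have "\<dots> = r i * ln (r i) * (\<Sum>j<m. U i j)" by (simp add: sum_distrib_left ac_simps)
    also have "\<dots> = xlogx (r i)" using Ur[OF i] True by (simp add: xlogx_def)
    finally show ?thesis by simp
  next
    case False
    then have "r i = 0" using r0 i by force
    then show ?thesis unfolding R_def by (simp add: xlogx_def)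
  qed
  have TLR: "T i j = L i j - R i j" for i j unfolding T_def L_def R_def by (simp add: algebra_simps)
  have "- (\<Sum>i<m. xlogx (r i)) = - (\<Sum>i<m. \<Sum>j<m. R i j)" by (simp add: xr)
  also have "\<dots> = (\<Sum>i<m. \<Sum>j<m. T i j) - (\<Sum>i<m. \<Sum>j<m. L i j)"
    by (simp add: TLR sum_subtractf)
  also have "\<dots> \<le> - (\<Sum>i<m. \<Sum>j<m. L i j)" using sumT by simp
  also have "\<dots> = (\<Sum>j<m. - (\<Sum>i<m. L i j))" by (subst sum.swap) (simp add: sum_negf)
  also have "\<dots> \<le> (\<Sum>j<m. d * - xlogx (s j))"
  proof (intro sum_mono)
    fix j assume j: "j \<in> {..<m}"
    show "- (\<Sum>i<m. L i j) \<le> d * - xlogx (s j)"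
    proof (cases "s j > 0")
      case False
      then have "L i j = 0" if "i < m" for i using spos[OF that] j unfolding L_def by auto
      moreover have "s j = 0" using False s0[of j] j by simp
      ultimately show ?thesis by (simp add: xlogx_def)
    next
      case True
      have sj1: "s j \<le> 1"
      proof -
        have "s j \<le> (\<Sum>j<m. s j)" using j s0 by (intro member_le_sum) auto
        then show ?thesis using ss by simp
      qed
      have lns: "ln (s j) \<le> 0" using True sj1 by simp
      have "(\<Sum>i<m. L i j) = (\<Sum>i<m. r i * U i j) * ln (s j)"
        unfolding L_def sum_distrib_right
        using r0 U0 j by (intro sum.cong refl) (auto simp: order_less_le)
      then have "- (\<Sum>i<m. L i j) = (\<Sum>i<m. r i * U i j) * (- ln (s j))" by simp
      also have "\<dots> \<le> (d * s j) * (- ln (s j))"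
        using dom j lns by (intro mult_right_mono) auto
      also have "\<dots> = d * - xlogx (s j)" using True by (simp add: xlogx_def)
      finally show ?thesis .
    qed
  qed
  also have "\<dots> = d * - (\<Sum>j<m. xlogx (s j))" by (simp add: sum_distrib_left sum_negf)
  finally show ?thesis .
qed

lemma classical_c:
  fixes s :: "nat \<Rightarrow> real" and mu :: "'k \<Rightarrow> real" and P :: "nat \<Rightarrow> 'k \<Rightarrow> real"
  assumes K: "finite K"
    and sdef: "\<And>j. j < m \<Longrightarrow> s j = (\<Sum>k\<in>K. mu k * P j k)"
    and mu0: "\<And>k. k \<in> K \<Longrightarrow> mu k \<ge> 0"
    and P0: "\<And>j k. j < m \<Longrightarrow> k \<in> K \<Longrightarrow> P j k \<ge> 0"
    and Psum: "\<And>k. k \<in> K \<Longrightarrow> (\<Sum>j<m. P j k) = 1"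
    and X: "\<And>k. k \<in> K \<Longrightarrow> mu k > 0 \<Longrightarrow> mu k * (\<Sum>j\<in>{j. j < m \<and> s j > 0}. P j k / s j) \<le> 1"
  shows "- (\<Sum>j<m. xlogx (s j)) \<le> - (\<Sum>k\<in>K. xlogx (mu k))"
proof -
  define G where "G j k = (if s j > 0 then mu k * P j k * (- ln (s j)) else 0)" for j k
  have s0: "s j \<ge> 0" if "j < m" for j unfolding sdef[OF that] using mu0 P0 that by (intro sum_nonneg) auto
  have sge: "mu k * P j k \<le> s j" if "j < m" "k \<in> K" for j k
    unfolding sdef[OF that(1)] using that mu0 P0 K by (intro member_le_sum) auto
  have xs: "- xlogx (s j) = (\<Sum>k\<in>K. G j k)" if j: "j < m" for j
  proof (cases "s j > 0")
    case True
    then show ?thesis unfolding G_def xlogx_def using sdef[OF j]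
      by (simp add: sum_distrib_right sum_negf)
  next
    case False
    then show ?thesis unfolding G_def xlogx_def using s0[OF j] by simp
  qed
  have Gk: "(\<Sum>j<m. G j k) \<le> - xlogx (mu k)" if k: "k \<in> K" for k
  proof (cases "mu k > 0")
    case False
    then have "mu k = 0" using mu0 k by force
    then show ?thesis unfolding G_def xlogx_def by simp
  next
    case True
    define S where "S = {j. j < m \<and> s j > 0}"
    have finS: "finite S" unfolding S_def by simp
    have Pz: "P j k = 0" if "j < m" "j \<notin> S" for j
    proof -
      have "s j = 0" using that s0 unfolding S_def by force
      then have "mu k * P j k \<le> 0" using sge[OF that(1) k] by simp
      then show ?thesis using True P0[OF that(1) k] by (simp add: mult_le_0_iff)
    qed
    have S_sub: "S \<subseteq> {..<m}" unfolding S_def by auto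
    have PS: "(\<Sum>j\<in>S. P j k) = 1"
    proof -
      have "(\<Sum>j<m. P j k) = (\<Sum>j\<in>S. P j k)"
        using Pz by (intro sum.mono_neutral_right) (auto simp: S_sub)
      then show ?thesis using Psum[OF k] by simp
    qed
    have "(\<Sum>j\<in>S. P j k * (ln (mu k) - ln (s j))) \<le> (\<Sum>j\<in>S. P j k * (mu k / s j - 1))"
    proof (intro sum_mono)
      fix j assume "j \<in> S"
      then have j: "j < m" "s j > 0" unfolding S_def by auto
      have "ln (mu k) - ln (s j) = ln (mu k / s j)" using True j by (simp add: ln_div)
      also have "\<dots> \<le> mu k / s j - 1" using True j by (intro ln_le_minus_one') simp
      finally show "P j k * (ln (mu k) - ln (s j)) \<le> P j k * (mu k / s j - 1)"
        using P0[OF j(1) k] by (intro mult_left_mono) auto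
    qed
    also have "\<dots> = mu k * (\<Sum>j\<in>S. P j k / s j) - (\<Sum>j\<in>S. P j k)"
      by (simp add: algebra_simps sum_subtractf sum_distrib_left)
    also have "\<dots> \<le> 0" using X[OF k True] PS unfolding S_def by simp
    finally have "(\<Sum>j\<in>S. P j k * (ln (mu k) - ln (s j))) \<le> 0" .
    moreover have "(\<Sum>j\<in>S. P j k * (ln (mu k) - ln (s j))) = ln (mu k) + (\<Sum>j\<in>S. P j k * (- ln (s j)))"
      using PS by (simp add: algebra_simps sum_subtractf sum_negf sum_distrib_right[symmetric])
    ultimately have A: "(\<Sum>j\<in>S. P j k * (- ln (s j))) \<le> - ln (mu k)" by simp
    have "(\<Sum>j<m. G j k) = (\<Sum>j\<in>S. G j k)"
      unfolding G_def S_def by (intro sum.mono_neutral_right) auto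
    also have "\<dots> = mu k * (\<Sum>j\<in>S. P j k * (- ln (s j)))"
      unfolding G_def S_def by (simp add: sum_distrib_left ac_simps)
    also have "\<dots> \<le> mu k * (- ln (mu k))" using A True by (intro mult_left_mono) auto
    also have "\<dots> = - xlogx (mu k)" using True by (simp add: xlogx_def)
    finally show ?thesis .
  qed
  have "- (\<Sum>j<m. xlogx (s j)) = (\<Sum>j<m. \<Sum>k\<in>K. G j k)" by (simp add: xs sum_negf[symmetric])
  also have "\<dots> = (\<Sum>k\<in>K. \<Sum>j<m. G j k)" by (rule sum.swap)
  also have "\<dots> \<le> (\<Sum>k\<in>K. - xlogx (mu k))" by (intro sum_mono Gk)
  also have "\<dots> = - (\<Sum>k\<in>K. xlogx (mu k))" by (simp add: sum_negf)
  finally show ?thesis .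
qed

lemma cmod_braket_sym: "v \<in> carrier_vec n \<Longrightarrow> w \<in> carrier_vec n \<Longrightarrow> cmod (braket v w) = cmod (braket w v)"
  by (metis braket_cnj complex_mod_cnj)

lemma cnj_mult_self: "cnj z * z = complex_of_real ((cmod z)\<^sup>2)"
  by (subst complex_norm_square) (simp add: mult.commute)

lemma mult_cnj_self: "z * cnj z = complex_of_real ((cmod z)\<^sup>2)"
  by (subst complex_norm_square) simp

context eigsys
begin

lemma mult_expand: assumes x: "x \<in> carrier_vec n"
  shows "A *\<^sub>v x = vec n (\<lambda>a. \<Sum>i<n. (complex_of_real (lam i) * braket (v i) x) * v i $ a)"
proof (rule eq_vecI)
  fix a assume "a < dim_vec (vec n (\<lambda>a. \<Sum>i<n. (complex_of_real (lam i) * braket (v i) x) * v i $ a))"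
  then have a: "a < n" by simp
  have "(A *\<^sub>v x) $ a = (\<Sum>b<n. A $$ (a,b) * x $ b)" by (rule mult_mat_vec_sum[OF A x a])
  also have "\<dots> = (\<Sum>b<n. \<Sum>i<n. complex_of_real (lam i) * v i $ a * cnj (v i $ b) * x $ b)"
    using a by (intro sum.cong refl) (simp add: entries sum_distrib_right)
  also have "\<dots> = (\<Sum>i<n. \<Sum>b<n. complex_of_real (lam i) * v i $ a * cnj (v i $ b) * x $ b)"
    by (rule sum.swap)
  also have "\<dots> = (\<Sum>i<n. (complex_of_real (lam i) * braket (v i) x) * v i $ a)"
    by (intro sum.cong refl) (simp add: braket_def vdim sum_distrib_left ac_simps)
  finally show "(A *\<^sub>v x) $ a = vec n (\<lambda>a. \<Sum>i<n. (complex_of_real (lam i) * braket (v i) x) * v i $ a) $ a"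
    using a by simp
qed (use A in auto)

lemma qf: assumes x: "x \<in> carrier_vec n"
  shows "braket x (A *\<^sub>v x) = complex_of_real (\<Sum>i<n. lam i * (cmod (braket (v i) x))\<^sup>2)"
proof -
  have "braket x (A *\<^sub>v x) = (\<Sum>i<n. (complex_of_real (lam i) * braket (v i) x) * braket x (v i))"
    unfolding mult_expand[OF x] by (rule braket_lincomb_right[OF x]) (use vc in auto)
  also have "\<dots> = (\<Sum>i<n. complex_of_real (lam i * (cmod (braket (v i) x))\<^sup>2))"
  proof (intro sum.cong refl)
    fix i assume "i \<in> {..<n}"
    then have "braket x (v i) = cnj (braket (v i) x)" using vc x by (simp add: braket_cnj[of _ n])
    then show "complex_of_real (lam i) * braket (v i) x * braket x (v i) = complex_of_real (lam i * (cmod (braket (v i) x))\<^sup>2)"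
      by (simp only: mult.assoc mult_cnj_self of_real_mult)
  qed
  finally show ?thesis by simp
qed

lemma qf_re: "x \<in> carrier_vec n \<Longrightarrow> Re (braket x (A *\<^sub>v x)) = (\<Sum>i<n. lam i * (cmod (braket (v i) x))\<^sup>2)"
  by (simp add: qf)

lemma eigval: "i < n \<Longrightarrow> lam i = Re (braket (v i) (A *\<^sub>v v i))"
  using vc on unfolding orthonormal_def by (simp add: ev braket_smult_right[of _ n])

lemma norm_sum: assumes x: "x \<in> carrier_vec n"
  shows "(\<Sum>i<n. (cmod (braket (v i) x))\<^sup>2) = Re (braket x x)"
proof -
  have "braket x x = (\<Sum>i<n. cnj (braket (v i) x) * braket (v i) x)" by (rule parseval[OF x x])
  also have "\<dots> = complex_of_real (\<Sum>i<n. (cmod (braket (v i) x))\<^sup>2)" by (simp add: cnj_mult_self)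
  finally show ?thesis by simp
qed

end

lemma quantum_main:
  fixes K :: "'k set" and mu :: "'k \<Rightarrow> real" and phi :: "'k \<Rightarrow> complex vec" and d :: real
  assumes rho: "eigsys m u \<rho> r" and sig: "eigsys m w \<sigma> s"
    and r0: "\<And>i. i < m \<Longrightarrow> r i \<ge> 0" and s0: "\<And>j. j < m \<Longrightarrow> s j \<ge> 0"
    and rs: "(\<Sum>i<m. r i) = 1" and ss: "(\<Sum>j<m. s j) = 1"
    and d0: "d \<ge> 0"
    and dom: "\<And>x. x \<in> carrier_vec m \<Longrightarrow> Re (braket x (\<rho> *\<^sub>v x)) \<le> d * Re (braket x (\<sigma> *\<^sub>v x))"
    and K: "finite K"
    and ens: "\<And>x. x \<in> carrier_vec m \<Longrightarrow> Re (braket x (\<sigma> *\<^sub>v x)) = (\<Sum>k\<in>K. mu k * (cmod (braket (phi k) x))\<^sup>2)"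
    and mu0: "\<And>k. k \<in> K \<Longrightarrow> mu k \<ge> 0"
    and phic: "\<And>k. k \<in> K \<Longrightarrow> phi k \<in> carrier_vec m"
    and phin: "\<And>k. k \<in> K \<Longrightarrow> braket (phi k) (phi k) = 1"
  shows "- (\<Sum>i<m. xlogx (r i)) \<le> d * - (\<Sum>k\<in>K. xlogx (mu k))"
proof -
  interpret R: eigsys m u \<rho> r by (rule rho)
  interpret S: eigsys m w \<sigma> s by (rule sig)
  define U where "U i j = (cmod (braket (u i) (w j)))\<^sup>2" for i j
  have step1: "- (\<Sum>i<m. xlogx (r i)) \<le> d * - (\<Sum>j<m. xlogx (s j))"
  proof (rule classical_a[OF r0 s0 rs ss, of U])
    show "U i j \<ge> 0" for i j unfolding U_def by simp
    show "(\<Sum>j<m. U i j) = 1" if i: "i < m" for i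
    proof -
      have "(\<Sum>j<m. U i j) = (\<Sum>j<m. (cmod (braket (w j) (u i)))\<^sup>2)"
        unfolding U_def using i R.vc S.vc by (intro sum.cong refl) (simp add: cmod_braket_sym[of _ m])
      also have "\<dots> = Re (braket (u i) (u i))" by (rule S.norm_sum[OF R.vc[OF i]])
      also have "\<dots> = 1" using R.on i unfolding orthonormal_def by simp
      finally show ?thesis .
    qed
    show "(\<Sum>i<m. U i j) = 1" if j: "j < m" for j
    proof -
      have "(\<Sum>i<m. U i j) = Re (braket (w j) (w j))" unfolding U_def by (rule R.norm_sum[OF S.vc[OF j]])
      also have "\<dots> = 1" using S.on j unfolding orthonormal_def by simp
      finally show ?thesis .
    qed
    show "(\<Sum>i<m. r i * U i j) \<le> d * s j" if j: "j < m" for j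
    proof -
      have "(\<Sum>i<m. r i * U i j) = Re (braket (w j) (\<rho> *\<^sub>v w j))"
        unfolding U_def by (rule R.qf_re[OF S.vc[OF j], symmetric])
      also have "\<dots> \<le> d * Re (braket (w j) (\<sigma> *\<^sub>v w j))" by (rule dom[OF S.vc[OF j]])
      also have "Re (braket (w j) (\<sigma> *\<^sub>v w j)) = s j" by (rule S.eigval[OF j, symmetric])
      finally show ?thesis .
    qed
  qed
  define P where "P j k = (cmod (braket (w j) (phi k)))\<^sup>2" for j k
  have step2: "- (\<Sum>j<m. xlogx (s j)) \<le> - (\<Sum>k\<in>K. xlogx (mu k))"
  proof (rule classical_c[OF K _ mu0, where m=m and s=s and P=P])
    show "s j = (\<Sum>k\<in>K. mu k * P j k)" if j: "j < m" for j
    proof -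
      have "s j = Re (braket (w j) (\<sigma> *\<^sub>v w j))" by (rule S.eigval[OF j])
      also have "\<dots> = (\<Sum>k\<in>K. mu k * (cmod (braket (phi k) (w j)))\<^sup>2)" by (rule ens[OF S.vc[OF j]])
      also have "\<dots> = (\<Sum>k\<in>K. mu k * P j k)"
        unfolding P_def using phic S.vc j by (intro sum.cong refl) (simp add: cmod_braket_sym[of _ m])
      finally show ?thesis .
    qed
    show "P j k \<ge> 0" for j k unfolding P_def by simp
    show "(\<Sum>j<m. P j k) = 1" if k: "k \<in> K" for k
      unfolding P_def using S.norm_sum[OF phic[OF k]] phin[OF k] by simp
    show "mu k * (\<Sum>j\<in>{j. j < m \<and> s j > 0}. P j k / s j) \<le> 1" if k: "k \<in> K" and muk: "mu k > 0" for k
    proof -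
      define SS where "SS = {j. j < m \<and> s j > 0}"
      have SSm: "SS \<subseteq> {..<m}" unfolding SS_def by auto
      have finSS: "finite SS" unfolding SS_def by simp
      define X where "X = (\<Sum>j\<in>SS. P j k / s j)"
      define coef where "coef j = braket (w j) (phi k) / complex_of_real (s j)" for j
      define y where "y = vec m (\<lambda>a. \<Sum>j\<in>SS. coef j * w j $ a)"
      have yc: "y \<in> carrier_vec m" unfolding y_def by simp
      have wy: "braket (w l) y = (if l \<in> SS then coef l else 0)" if l: "l < m" for l
      proof -
        have "braket (w l) y = (\<Sum>j\<in>SS. coef j * braket (w l) (w j))"
          unfolding y_def by (rule braket_lincomb_right[OF S.vc[OF l]]) (use S.vc SSm in auto)
        also have "\<dots> = (\<Sum>j\<in>SS. if j = l then coef j else 0)"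
          using S.on l SSm unfolding orthonormal_def by (intro sum.cong refl) auto
        also have "\<dots> = (if l \<in> SS then coef l else 0)" using finSS by simp
        finally show ?thesis .
      qed
      have "Re (braket y (\<sigma> *\<^sub>v y)) = (\<Sum>l<m. s l * (cmod (braket (w l) y))\<^sup>2)" by (rule S.qf_re[OF yc])
      also have "\<dots> = (\<Sum>l\<in>SS. s l * (cmod (coef l))\<^sup>2)"
        using SSm by (intro sum.mono_neutral_cong_right) (auto simp: wy)
      also have "\<dots> = X"
        unfolding X_def P_def coef_def SS_def
        by (intro sum.cong refl) (auto simp: norm_divide power_divide power2_eq_square)
      finally have qy: "Re (braket y (\<sigma> *\<^sub>v y)) = X" .
      have "braket (phi k) y = (\<Sum>j\<in>SS. coef j * braket (phi k) (w j))"
        unfolding y_def by (rule braket_lincomb_right[OF phic[OF k]]) (use S.vc SSm in auto)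
      also have "\<dots> = (\<Sum>j\<in>SS. complex_of_real (P j k / s j))"
      proof (intro sum.cong refl)
        fix j assume "j \<in> SS"
        then have j: "j < m" using SSm by auto
        have "braket (phi k) (w j) = cnj (braket (w j) (phi k))"
          using phic[OF k] S.vc[OF j] by (simp add: braket_cnj[of _ m])
        have e: "braket (w j) (phi k) * cnj (braket (w j) (phi k)) = complex_of_real (P j k)"
          unfolding P_def by (rule mult_cnj_self)
        have "coef j * braket (phi k) (w j) = (braket (w j) (phi k) * cnj (braket (w j) (phi k))) / complex_of_real (s j)"
          unfolding coef_def \<open>braket (phi k) (w j) = _\<close> by simp
        also have "\<dots> = complex_of_real (P j k) / complex_of_real (s j)" unfolding e ..
        also have "\<dots> = complex_of_real (P j k / s j)" by simp
        finally show "coef j * braket (phi k) (w j) = complex_of_real (P j k / s j)" .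
      qed
      also have "\<dots> = complex_of_real X" unfolding X_def by simp
      finally have py: "braket (phi k) y = complex_of_real X" .
      have X0: "X \<ge> 0" unfolding X_def P_def SS_def by (intro sum_nonneg) auto
      have "mu k * X\<^sup>2 \<le> (\<Sum>k'\<in>K. mu k' * (cmod (braket (phi k') y))\<^sup>2)"
      proof -
        have "mu k * (cmod (braket (phi k) y))\<^sup>2 \<le> (\<Sum>k'\<in>K. mu k' * (cmod (braket (phi k') y))\<^sup>2)"
          using K k mu0 by (intro member_le_sum) auto
        then show ?thesis using py X0 by simp
      qed
      also have "\<dots> = X" using ens[OF yc] qy by simp
      finally have "mu k * X\<^sup>2 \<le> X" .
      then have "mu k * X \<le> 1"
      proof (cases "X = 0")
        case False
        then have "X > 0" using X0 by simp
        with \<open>mu k * X\<^sup>2 \<le> X\<close> show ?thesis by (simp add: power2_eq_square)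
      qed simp
      then show ?thesis unfolding X_def SS_def .
    qed
  qed
  have "d * - (\<Sum>j<m. xlogx (s j)) \<le> d * - (\<Sum>k\<in>K. xlogx (mu k))"
    using step2 d0 by (intro mult_left_mono) auto
  with step1 show ?thesis by linarith
qed

lemma sum_sq_le: fixes a :: "nat \<Rightarrow> real"
  shows "(\<Sum>n<d. a n)\<^sup>2 \<le> real d * (\<Sum>n<d. (a n)\<^sup>2)"
proof -
  have "0 \<le> (\<Sum>n<d. \<Sum>m<d. (a n - a m)\<^sup>2)" by (intro sum_nonneg) auto
  also have "\<dots> = (\<Sum>n<d. \<Sum>m<d. (a n)\<^sup>2 + (a m)\<^sup>2 - 2 * (a n * a m))"
    by (intro sum.cong refl) (simp add: power2_eq_square algebra_simps)
  also have "\<dots> = 2 * (real d * (\<Sum>n<d. (a n)\<^sup>2)) - 2 * (\<Sum>n<d. a n)\<^sup>2"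
    by (simp add: sum.distrib sum_subtractf sum_distrib_left sum_distrib_right power2_eq_square
        sum_constant algebra_simps)
  finally show ?thesis by simp
qed

lemma cmod_sum_sq_le: fixes z :: "nat \<Rightarrow> complex"
  shows "(cmod (\<Sum>n<d. z n))\<^sup>2 \<le> real d * (\<Sum>n<d. (cmod (z n))\<^sup>2)"
proof -
  have "cmod (\<Sum>n<d. z n) \<le> (\<Sum>n<d. cmod (z n))" by (rule norm_sum)
  then have "(cmod (\<Sum>n<d. z n))\<^sup>2 \<le> (\<Sum>n<d. cmod (z n))\<^sup>2"
    by (intro power_mono) auto
  also have "\<dots> \<le> real d * (\<Sum>n<d. (cmod (z n))\<^sup>2)" by (rule sum_sq_le)
  finally show ?thesis .
qed

lemma idx_bound: "i < dA \<Longrightarrow> j < dB \<Longrightarrow> i * dB + j < dA * (dB::nat)"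
proof -
  assume "i < dA" "j < dB"
  then have "i * dB + j < i * dB + dB" by simp
  also have "\<dots> = Suc i * dB" by simp
  also have "\<dots> \<le> dA * dB" using \<open>i < dA\<close> by (intro mult_le_mono1) simp
  finally show ?thesis .
qed

lemma sum_pair_index: fixes f :: "nat \<Rightarrow> 'a::comm_monoid_add"
  assumes "dB > 0"
  shows "(\<Sum>i<dA. \<Sum>j<dB. f (i * dB + j)) = (\<Sum>a<dA * dB. f a)"
proof -
  have "(\<Sum>i<dA. \<Sum>j<dB. f (i * dB + j)) = (\<Sum>(i,j)\<in>{..<dA} \<times> {..<dB}. f (i * dB + j))"
    by (simp add: sum.cartesian_product)
  also have "\<dots> = (\<Sum>a<dA * dB. f a)"
  proof (rule sum.reindex_bij_witness[where i = "\<lambda>a. (a div dB, a mod dB)" and j = "\<lambda>(i,j). i * dB + j"])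
    fix a assume "a \<in> {..<dA * dB}"
    then show "(case (a div dB, a mod dB) of (i, j) \<Rightarrow> i * dB + j) = a" by simp
    show "(a div dB, a mod dB) \<in> {..<dA} \<times> {..<dB}"
      using \<open>a \<in> {..<dA * dB}\<close> assms by (auto simp: less_mult_imp_div_less)
  next
    fix p assume p: "p \<in> {..<dA} \<times> {..<dB}"
    then obtain i j where pij: "p = (i,j)" "i < dA" "j < dB" by auto
    then show "((case p of (i, j) \<Rightarrow> i * dB + j) div dB, (case p of (i, j) \<Rightarrow> i * dB + j) mod dB) = p"
      by simp
    show "(case p of (i, j) \<Rightarrow> i * dB + j) \<in> {..<dA * dB}" using pij idx_bound by simp
  qed (auto simp: split_def)
  finally show ?thesis .
qed

definition rhoA :: "nat \<Rightarrow> nat \<Rightarrow> complex vec \<Rightarrow> complex mat" where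
  "rhoA dA dB psi = ptrace_B dA dB (proj psi)"

lemma rhoA_carrier: "rhoA dA dB psi \<in> carrier_mat dA dA"
  by (simp add: rhoA_def ptrace_B_def)

lemma rhoA_entry: assumes "psi \<in> carrier_vec (dA * dB)" "i < dA" "i' < dA"
  shows "rhoA dA dB psi $$ (i,i') = (\<Sum>j<dB. psi $ (i * dB + j) * cnj (psi $ (i' * dB + j)))"
  using assms idx_bound[OF assms(2)] idx_bound[OF assms(3)]
  by (simp add: rhoA_def ptrace_B_def proj_def)

lemma rhoA_hermitian: assumes "psi \<in> carrier_vec (dA * dB)"
  shows "hermitian_mat (rhoA dA dB psi)"
  unfolding hermitian_mat_def
proof
  show "square_mat (rhoA dA dB psi)" using rhoA_carrier[of dA dB psi] by auto
  show "mat_adjoint (rhoA dA dB psi) = rhoA dA dB psi"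
  proof (rule eq_matI)
    fix i i' assume ii: "i < dim_row (rhoA dA dB psi)" "i' < dim_col (rhoA dA dB psi)"
    then have ii': "i < dA" "i' < dA" using rhoA_carrier[of dA dB psi] by auto
    have "mat_adjoint (rhoA dA dB psi) $$ (i,i') = cnj (rhoA dA dB psi $$ (i',i))"
      using ii' rhoA_carrier[of dA dB psi] unfolding mat_adjoint_def by (auto simp: mat_of_rows_def col_def)
    also have "\<dots> = rhoA dA dB psi $$ (i,i')"
      unfolding rhoA_entry[OF assms ii'] rhoA_entry[OF assms ii'(2,1)] by (simp add: mult.commute)
    finally show "mat_adjoint (rhoA dA dB psi) $$ (i,i') = rhoA dA dB psi $$ (i,i')" .
  qed (use rhoA_carrier[of dA dB psi] in \<open>auto simp: mat_adjoint_def\<close>)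
qed

definition wv :: "nat \<Rightarrow> nat \<Rightarrow> complex vec \<Rightarrow> complex vec \<Rightarrow> nat \<Rightarrow> complex" where
  "wv dA dB psi x j = (\<Sum>i<dA. cnj (x $ i) * psi $ (i * dB + j))"

lemma qf_rhoA: assumes psi: "psi \<in> carrier_vec (dA * dB)" and x: "x \<in> carrier_vec dA"
  shows "braket x (rhoA dA dB psi *\<^sub>v x) = complex_of_real (\<Sum>j<dB. (cmod (wv dA dB psi x j))\<^sup>2)"
proof -
  have "braket x (rhoA dA dB psi *\<^sub>v x) = (\<Sum>i<dA. cnj (x $ i) * (\<Sum>i'<dA. rhoA dA dB psi $$ (i,i') * x $ i'))"
    unfolding braket_def using x
  proof (intro sum.cong)
    show "{..<dim_vec x} = {..<dA}" using x by simp
  next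
    fix i assume "i \<in> {..<dA}"
    then show "cnj (x $ i) * (rhoA dA dB psi *\<^sub>v x) $ i = cnj (x $ i) * (\<Sum>i'<dA. rhoA dA dB psi $$ (i,i') * x $ i')"
      using mult_mat_vec_sum[OF rhoA_carrier x, of i] by simp
  qed
  also have "\<dots> = (\<Sum>i<dA. \<Sum>i'<dA. \<Sum>j<dB. (cnj (x $ i) * psi $ (i * dB + j)) * (x $ i' * cnj (psi $ (i' * dB + j))))"
    by (intro sum.cong refl) (simp add: rhoA_entry[OF psi] sum_distrib_left sum_distrib_right ac_simps)
  also have "\<dots> = (\<Sum>j<dB. \<Sum>i<dA. \<Sum>i'<dA. (cnj (x $ i) * psi $ (i * dB + j)) * (x $ i' * cnj (psi $ (i' * dB + j))))"
    by (simp add: sum.swap[of _ "{..<dB}"])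
  also have "\<dots> = (\<Sum>j<dB. wv dA dB psi x j * cnj (wv dA dB psi x j))"
    unfolding wv_def cnj_sum sum_product by simp
  also have "\<dots> = (\<Sum>j<dB. complex_of_real ((cmod (wv dA dB psi x j))\<^sup>2))"
    by (simp add: mult_cnj_self)
  finally show ?thesis by simp
qed

lemma qf_rhoA_nonneg: "psi \<in> carrier_vec (dA * dB) \<Longrightarrow> x \<in> carrier_vec dA \<Longrightarrow> Re (braket x (rhoA dA dB psi *\<^sub>v x)) \<ge> 0"
  by (simp add: qf_rhoA sum_nonneg)

lemma trace_rhoA: assumes psi: "psi \<in> carrier_vec (dA * dB)" and dB: "dB > 0"
  shows "(\<Sum>i<dA. rhoA dA dB psi $$ (i,i)) = braket psi psi"
proof -
  have "(\<Sum>i<dA. rhoA dA dB psi $$ (i,i)) = (\<Sum>i<dA. \<Sum>j<dB. cnj (psi $ (i * dB + j)) * psi $ (i * dB + j))"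
    by (intro sum.cong refl) (simp add: rhoA_entry[OF psi] mult.commute)
  also have "\<dots> = (\<Sum>a<dA * dB. cnj (psi $ a) * psi $ a)"
    by (rule sum_pair_index[OF dB])
  also have "\<dots> = braket psi psi" using psi by (simp add: braket_def)
  finally show ?thesis .
qed

context eigsys
begin

lemma trace_eig: "(\<Sum>a<n. A $$ (a,a)) = complex_of_real (\<Sum>i<n. lam i)"
proof -
  have "(\<Sum>a<n. A $$ (a,a)) = (\<Sum>a<n. \<Sum>i<n. complex_of_real (lam i) * (v i $ a * cnj (v i $ a)))"
    by (intro sum.cong refl) (simp add: entries ac_simps)
  also have "\<dots> = (\<Sum>i<n. complex_of_real (lam i) * braket (v i) (v i))"
    by (subst sum.swap) (simp add: braket_def vdim sum_distrib_left ac_simps)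
  also have "\<dots> = (\<Sum>i<n. complex_of_real (lam i))"
    using on unfolding orthonormal_def by (intro sum.cong refl) simp
  finally show ?thesis by simp
qed

lemma eig_nonneg: assumes "\<And>x. x \<in> carrier_vec n \<Longrightarrow> Re (braket x (A *\<^sub>v x)) \<ge> 0"
  shows "i < n \<Longrightarrow> lam i \<ge> 0"
  using eigval assms vc by simp

end

lemma spectral_eigsys: assumes "A \<in> carrier_mat n n" "hermitian_mat A"
  shows "\<exists>v lam. eigsys n v A lam"
  using spectral[OF assms] assms(1) by (auto simp: eigsys_def eigsys_axioms_def onb_def)

lemma xlogx_mult: assumes "p \<ge> 0" "q \<ge> 0"
  shows "xlogx (p * q) = q * xlogx p + p * xlogx q"
proof (cases "p = 0 \<or> q = 0")
  case True
  then show ?thesis by (auto simp: xlogx_def)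
next
  case False
  then have "p > 0" "q > 0" using assms by auto
  then show ?thesis by (simp add: xlogx_def ln_mult algebra_simps)
qed

definition wsum_mat :: "nat \<Rightarrow> nat \<Rightarrow> (nat \<Rightarrow> complex) \<Rightarrow> (nat \<Rightarrow> complex mat) \<Rightarrow> complex mat" where
  "wsum_mat m d w M = mat m m (\<lambda>(i,i'). \<Sum>n<d. w n * M n $$ (i,i'))"

lemma wsum_carrier: "wsum_mat m d w M \<in> carrier_mat m m" by (simp add: wsum_mat_def)

lemma qf_wsum: assumes x: "x \<in> carrier_vec m" and M: "\<And>n. n < d \<Longrightarrow> M n \<in> carrier_mat m m"
  shows "braket x (wsum_mat m d w M *\<^sub>v x) = (\<Sum>n<d. w n * braket x (M n *\<^sub>v x))"
proof -
  have "braket x (wsum_mat m d w M *\<^sub>v x) = (\<Sum>i<m. cnj (x $ i) * (\<Sum>i'<m. (\<Sum>n<d. w n * M n $$ (i,i')) * x $ i'))"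
    unfolding braket_def
  proof (intro sum.cong)
    show "{..<dim_vec x} = {..<m}" using x by simp
  next
    fix i assume "i \<in> {..<m}"
    then show "cnj (x $ i) * (wsum_mat m d w M *\<^sub>v x) $ i = cnj (x $ i) * (\<Sum>i'<m. (\<Sum>n<d. w n * M n $$ (i,i')) * x $ i')"
      using mult_mat_vec_sum[OF wsum_carrier x, of i d w M] by (simp add: wsum_mat_def)
  qed
  also have "\<dots> = (\<Sum>n<d. w n * (\<Sum>i<m. cnj (x $ i) * (\<Sum>i'<m. M n $$ (i,i') * x $ i')))"
    by (simp add: sum_distrib_left sum_distrib_right ac_simps sum.swap[of _ "{..<d}"])
  also have "\<dots> = (\<Sum>n<d. w n * braket x (M n *\<^sub>v x))"
  proof (intro sum.cong refl)
    fix n assume n: "n \<in> {..<d}"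
    have "braket x (M n *\<^sub>v x) = (\<Sum>i<m. cnj (x $ i) * (\<Sum>i'<m. M n $$ (i,i') * x $ i'))"
      unfolding braket_def
    proof (intro sum.cong)
      show "{..<dim_vec x} = {..<m}" using x by simp
    next
      fix i assume "i \<in> {..<m}"
      then show "cnj (x $ i) * (M n *\<^sub>v x) $ i = cnj (x $ i) * (\<Sum>i'<m. M n $$ (i,i') * x $ i')"
        using mult_mat_vec_sum[OF M x, of n i] n by simp
    qed
    then show "w n * (\<Sum>i<m. cnj (x $ i) * (\<Sum>i'<m. M n $$ (i,i') * x $ i')) = w n * braket x (M n *\<^sub>v x)"
      by simp
  qed
  finally show ?thesis .
qed

lemma wsum_hermitian: assumes M: "\<And>n. n < d \<Longrightarrow> M n \<in> carrier_mat m m"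
  and h: "\<And>n. n < d \<Longrightarrow> hermitian_mat (M n)" and w: "\<And>n. n < d \<Longrightarrow> cnj (w n) = w n"
  shows "hermitian_mat (wsum_mat m d w M)"
  unfolding hermitian_mat_def
proof
  show "square_mat (wsum_mat m d w M)" by (simp add: wsum_mat_def)
  show "mat_adjoint (wsum_mat m d w M) = wsum_mat m d w M"
  proof (rule eq_matI)
    fix i i' assume "i < dim_row (wsum_mat m d w M)" "i' < dim_col (wsum_mat m d w M)"
    then have ii: "i < m" "i' < m" by (auto simp: wsum_mat_def)
    have "mat_adjoint (wsum_mat m d w M) $$ (i,i') = cnj (wsum_mat m d w M $$ (i',i))"
      using ii unfolding mat_adjoint_def by (auto simp: mat_of_rows_def col_def wsum_mat_def)
    also have "\<dots> = (\<Sum>n<d. cnj (w n) * cnj (M n $$ (i',i)))" using ii by (simp add: wsum_mat_def)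
    also have "\<dots> = (\<Sum>n<d. w n * M n $$ (i,i'))"
    proof (intro sum.cong refl)
      fix n assume "n \<in> {..<d}"
      then have "M n $$ (i,i') = cnj (M n $$ (i',i))" by (intro hermitian_entry[OF h M]) (use ii in auto)
      then show "cnj (w n) * cnj (M n $$ (i',i)) = w n * M n $$ (i,i')" using w \<open>n \<in> {..<d}\<close> by simp
    qed
    also have "\<dots> = wsum_mat m d w M $$ (i,i')" using ii by (simp add: wsum_mat_def)
    finally show "mat_adjoint (wsum_mat m d w M) $$ (i,i') = wsum_mat m d w M $$ (i,i')" .
  qed (auto simp: mat_adjoint_def wsum_mat_def)
qed

lemma entropy_bound:
  fixes dA dB d :: nat and k :: "nat \<Rightarrow> complex vec" and c :: "nat \<Rightarrow> complex" and psi :: "complex vec"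
  assumes dB: "dB > 0"
    and kc: "\<And>n. n < d \<Longrightarrow> k n \<in> carrier_vec (dA * dB)"
    and kn: "\<And>n. n < d \<Longrightarrow> braket (k n) (k n) = 1"
    and psi: "psi = vec (dA * dB) (\<lambda>a. \<Sum>n<d. c n * k n $ a)"
    and psin: "braket psi psi = 1"
    and cn: "(\<Sum>n<d. (cmod (c n))\<^sup>2) = 1"
  shows "vn_entropy (rhoA dA dB psi) \<le> real d * (- (\<Sum>n<d. xlogx ((cmod (c n))\<^sup>2)) +
           (\<Sum>n<d. (cmod (c n))\<^sup>2 * vn_entropy (rhoA dA dB (k n))))"
proof -
  define p where "p n = (cmod (c n))\<^sup>2" for n
  have p0: "p n \<ge> 0" for n unfolding p_def by simp
  have psic: "psi \<in> carrier_vec (dA * dB)" unfolding psi by simp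
  have "\<forall>n\<in>{..<d}. \<exists>el. eigsys dA (fst el) (rhoA dA dB (k n)) (snd el)"
  proof
    fix n assume "n \<in> {..<d}"
    then have "\<exists>v lam. eigsys dA v (rhoA dA dB (k n)) lam"
      using kc by (intro spectral_eigsys rhoA_carrier rhoA_hermitian) auto
    then show "\<exists>el. eigsys dA (fst el) (rhoA dA dB (k n)) (snd el)" by auto
  qed
  then obtain EL where EL: "\<And>n. n < d \<Longrightarrow> eigsys dA (fst (EL n)) (rhoA dA dB (k n)) (snd (EL n))"
    by (metis bchoice lessThan_iff)
  define e where "e n = fst (EL n)" for n
  define lam where "lam n = snd (EL n)" for n
  have EE: "eigsys dA (e n) (rhoA dA dB (k n)) (lam n)" if "n < d" for n
    using EL[OF that] unfolding e_def lam_def .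
  have lam0: "lam n a \<ge> 0" if "n < d" "a < dA" for n a
    using eigsys.eig_nonneg[OF EE[OF that(1)] _ that(2)] qf_rhoA_nonneg kc that(1) by blast
  have lam1: "(\<Sum>a<dA. lam n a) = 1" if "n < d" for n
  proof -
    have "complex_of_real (\<Sum>a<dA. lam n a) = (\<Sum>a<dA. rhoA dA dB (k n) $$ (a,a))"
      using eigsys.trace_eig[OF EE[OF that]] by simp
    also have "\<dots> = 1" using trace_rhoA[OF kc[OF that] dB] kn[OF that] by simp
    finally show ?thesis by (metis of_real_eq_1_iff)
  qed
  have Sn: "vn_entropy (rhoA dA dB (k n)) = - (\<Sum>a<dA. xlogx (lam n a))" if "n < d" for n
    by (rule eigsys.vn_entropy_eig[OF EE[OF that]])
  define \<sigma> where "\<sigma> = wsum_mat dA d (\<lambda>n. complex_of_real (p n)) (\<lambda>n. rhoA dA dB (k n))"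
  have sigc: "\<sigma> \<in> carrier_mat dA dA" unfolding \<sigma>_def by (rule wsum_carrier)
  have sigh: "hermitian_mat \<sigma>" unfolding \<sigma>_def
    by (rule wsum_hermitian) (use rhoA_carrier rhoA_hermitian kc in auto)
  have qsig: "Re (braket x (\<sigma> *\<^sub>v x)) = (\<Sum>n<d. p n * Re (braket x (rhoA dA dB (k n) *\<^sub>v x)))"
    if x: "x \<in> carrier_vec dA" for x
    unfolding \<sigma>_def qf_wsum[OF x rhoA_carrier] by (simp add: Re_sum)
  obtain w s where SS: "eigsys dA w \<sigma> s" using spectral_eigsys[OF sigc sigh] by blast
  obtain u r where RR: "eigsys dA u (rhoA dA dB psi) r"
    using spectral_eigsys[OF rhoA_carrier rhoA_hermitian[OF psic]] by blast
  have r0: "r i \<ge> 0" if "i < dA" for i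
    using eigsys.eig_nonneg[OF RR _ that] qf_rhoA_nonneg psic by blast
  have rs: "(\<Sum>i<dA. r i) = 1"
  proof -
    have "complex_of_real (\<Sum>i<dA. r i) = (\<Sum>a<dA. rhoA dA dB psi $$ (a,a))"
      using eigsys.trace_eig[OF RR] by simp
    also have "\<dots> = 1" using trace_rhoA[OF psic dB] psin by simp
    finally show ?thesis by (metis of_real_eq_1_iff)
  qed
  have s0: "s j \<ge> 0" if "j < dA" for j
  proof (rule eigsys.eig_nonneg[OF SS _ that])
    fix x :: "complex vec" assume "x \<in> carrier_vec dA"
    then show "Re (braket x (\<sigma> *\<^sub>v x)) \<ge> 0" unfolding qsig[OF \<open>x \<in> carrier_vec dA\<close>]
      using p0 qf_rhoA_nonneg kc by (intro sum_nonneg mult_nonneg_nonneg) auto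
  qed
  have ss: "(\<Sum>j<dA. s j) = 1"
  proof -
    have "complex_of_real (\<Sum>j<dA. s j) = (\<Sum>a<dA. \<sigma> $$ (a,a))"
      using eigsys.trace_eig[OF SS] by simp
    also have "\<dots> = (\<Sum>n<d. complex_of_real (p n) * (\<Sum>a<dA. rhoA dA dB (k n) $$ (a,a)))"
      unfolding \<sigma>_def wsum_mat_def by (simp add: sum_distrib_left sum.swap[of _ "{..<d}"])
    also have "\<dots> = (\<Sum>n<d. complex_of_real (p n))"
      by (intro sum.cong refl) (use trace_rhoA[OF kc dB] kn in auto)
    also have "\<dots> = 1" by (simp only: of_real_sum[symmetric] p_def cn of_real_1)
    finally show ?thesis by (metis of_real_eq_1_iff)
  qed
  define K where "K = {..<d} \<times> {..<dA}"
  define mu where "mu = (\<lambda>(n,a). p n * lam n a)"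
  define phi where "phi = (\<lambda>(n,a). e n a)"
  have main: "- (\<Sum>i<dA. xlogx (r i)) \<le> real d * - (\<Sum>q\<in>K. xlogx (mu q))"
  proof (rule quantum_main[OF RR SS r0 s0 rs ss])
    show "real d \<ge> 0" by simp
    show "finite K" unfolding K_def by simp
    show "mu q \<ge> 0" if "q \<in> K" for q using that p0 lam0 unfolding K_def mu_def by auto
    show "phi q \<in> carrier_vec dA" if "q \<in> K" for q
      using that eigsys.axioms(1)[OF EE] unfolding K_def phi_def by (auto simp: onb_def)
    show "braket (phi q) (phi q) = 1" if "q \<in> K" for q
      using that eigsys.axioms(1)[OF EE] unfolding K_def phi_def by (auto simp: onb_def orthonormal_def)
    show "Re (braket x (\<sigma> *\<^sub>v x)) = (\<Sum>q\<in>K. mu q * (cmod (braket (phi q) x))\<^sup>2)"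
      if x: "x \<in> carrier_vec dA" for x
    proof -
      have "Re (braket x (\<sigma> *\<^sub>v x)) = (\<Sum>n<d. p n * (\<Sum>a<dA. lam n a * (cmod (braket (e n a) x))\<^sup>2))"
        unfolding qsig[OF x] by (intro sum.cong refl) (simp add: eigsys.qf_re[OF EE x])
      also have "\<dots> = (\<Sum>n<d. \<Sum>a<dA. mu (n,a) * (cmod (braket (phi (n,a)) x))\<^sup>2)"
        unfolding mu_def phi_def by (simp add: sum_distrib_left ac_simps)
      also have "\<dots> = (\<Sum>q\<in>K. mu q * (cmod (braket (phi q) x))\<^sup>2)"
        unfolding K_def by (subst sum.cartesian_product) (simp add: case_prod_beta)
      finally show ?thesis .
    qed
    show "Re (braket x (rhoA dA dB psi *\<^sub>v x)) \<le> real d * Re (braket x (\<sigma> *\<^sub>v x))"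
      if x: "x \<in> carrier_vec dA" for x
    proof -
      have wpsi: "wv dA dB psi x j = (\<Sum>n<d. c n * wv dA dB (k n) x j)" if j: "j < dB" for j
      proof -
        have "wv dA dB psi x j = (\<Sum>i<dA. cnj (x $ i) * (\<Sum>n<d. c n * k n $ (i * dB + j)))"
          unfolding wv_def psi using idx_bound j by (intro sum.cong refl) auto
        also have "\<dots> = (\<Sum>n<d. c n * wv dA dB (k n) x j)"
          unfolding wv_def by (simp add: sum_distrib_left ac_simps sum.swap[of _ "{..<d}"])
        finally show ?thesis .
      qed
      have "Re (braket x (rhoA dA dB psi *\<^sub>v x)) = (\<Sum>j<dB. (cmod (\<Sum>n<d. c n * wv dA dB (k n) x j))\<^sup>2)"
        unfolding qf_rhoA[OF psic x] by (simp add: wpsi)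
      also have "\<dots> \<le> (\<Sum>j<dB. real d * (\<Sum>n<d. (cmod (c n * wv dA dB (k n) x j))\<^sup>2))"
        by (intro sum_mono cmod_sum_sq_le)
      also have "\<dots> = real d * (\<Sum>n<d. p n * (\<Sum>j<dB. (cmod (wv dA dB (k n) x j))\<^sup>2))"
        unfolding p_def by (simp add: sum_distrib_left norm_mult power_mult_distrib ac_simps sum.swap[of _ "{..<d}"])
      also have "\<dots> = real d * Re (braket x (\<sigma> *\<^sub>v x))"
        unfolding qsig[OF x] using kc x by (simp add: qf_rhoA)
      finally show ?thesis .
    qed
  qed
  have "(\<Sum>q\<in>K. xlogx (mu q)) = (\<Sum>n<d. \<Sum>a<dA. xlogx (mu (n,a)))"
    unfolding K_def by (subst sum.cartesian_product) (simp add: case_prod_beta)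
  also have "\<dots> = (\<Sum>n<d. \<Sum>a<dA. xlogx (p n * lam n a))" unfolding mu_def by simp
  also have "\<dots> = (\<Sum>n<d. xlogx (p n) - p n * vn_entropy (rhoA dA dB (k n)))"
  proof (intro sum.cong refl)
    fix n assume "n \<in> {..<d}"
    then have n: "n < d" by simp
    have "(\<Sum>a<dA. xlogx (p n * lam n a)) = (\<Sum>a<dA. lam n a * xlogx (p n) + p n * xlogx (lam n a))"
      using p0 lam0[OF n] by (intro sum.cong refl) (simp add: xlogx_mult)
    also have "\<dots> = xlogx (p n) * (\<Sum>a<dA. lam n a) + p n * (\<Sum>a<dA. xlogx (lam n a))"
      by (simp add: sum.distrib sum_distrib_left sum_distrib_right ac_simps)
    also have "\<dots> = xlogx (p n) - p n * vn_entropy (rhoA dA dB (k n))"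
      using lam1[OF n] Sn[OF n] by simp
    finally show "(\<Sum>a<dA. xlogx (p n * lam n a)) = xlogx (p n) - p n * vn_entropy (rhoA dA dB (k n))" .
  qed
  finally have "- (\<Sum>q\<in>K. xlogx (mu q)) = - (\<Sum>n<d. xlogx (p n)) + (\<Sum>n<d. p n * vn_entropy (rhoA dA dB (k n)))"
    by (simp add: sum_subtractf)
  moreover have "vn_entropy (rhoA dA dB psi) = - (\<Sum>i<dA. xlogx (r i))"
    by (rule eigsys.vn_entropy_eig[OF RR])
  ultimately show ?thesis using main unfolding p_def by simp
qed

lemma bessel:
  assumes x: "x \<in> carrier_vec N" and vc: "\<And>i. i < m \<Longrightarrow> v i \<in> carrier_vec N" and on: "orthonormal m v"
  shows "(\<Sum>i<m. (cmod (braket (v i) x))\<^sup>2) \<le> Re (braket x x)"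
proof -
  define P where "P = projm N m v *\<^sub>v x"
  have Pe: "P = vec N (\<lambda>a. \<Sum>i<m. braket (v i) x * v i $ a)" unfolding P_def by (rule projm_mult[OF x vc])
  have Pc: "P \<in> carrier_vec N" unfolding Pe by simp
  define y where "y = x - P"
  have yc: "y \<in> carrier_vec N" unfolding y_def using x Pc by simp
  have vy: "braket (v j) y = 0" if j: "j < m" for j
    unfolding y_def using braket_projm[OF x vc on j] braket_minus_right[OF vc[OF j] x Pc]
    unfolding P_def by simp
  have Py: "braket P y = 0"
    unfolding Pe by (subst braket_lincomb_left[OF yc]) (use vc vy in auto)
  have xP: "braket x P = (\<Sum>i<m. complex_of_real ((cmod (braket (v i) x))\<^sup>2))"
  proof -
    have "braket x P = (\<Sum>i<m. braket (v i) x * braket x (v i))"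
      unfolding Pe by (rule braket_lincomb_right[OF x]) (use vc in auto)
    also have "\<dots> = (\<Sum>i<m. complex_of_real ((cmod (braket (v i) x))\<^sup>2))"
    proof (intro sum.cong refl)
      fix i assume "i \<in> {..<m}"
      then have "braket x (v i) = cnj (braket (v i) x)" using vc x by (simp add: braket_cnj[of _ N])
      then show "braket (v i) x * braket x (v i) = complex_of_real ((cmod (braket (v i) x))\<^sup>2)"
        by (simp only: mult_cnj_self)
    qed
    finally show ?thesis .
  qed
  have "braket y y = braket x y - braket P y" by (subst (1) y_def) (rule braket_minus_left[OF x Pc yc])
  also have "\<dots> = braket x y" using Py by simp
  also have "\<dots> = braket x x - braket x P" unfolding y_def by (rule braket_minus_right[OF x x Pc])
  finally have "Re (braket y y) = Re (braket x x) - (\<Sum>i<m. (cmod (braket (v i) x))\<^sup>2)"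
    unfolding xP by (simp add: Re_sum)
  with braket_self_nonneg[of y] show ?thesis by simp
qed

lemma orthonormal_card:
  assumes vc: "\<And>i. i < m \<Longrightarrow> v i \<in> carrier_vec N" and on: "orthonormal m v"
  shows "m \<le> N"
proof -
  define e where "e a = (unit_vec N a :: complex vec)" for a :: nat
  have ec: "e a \<in> carrier_vec N" for a unfolding e_def by simp
  have ve: "braket (v i) (e a) = cnj (v i $ a)" if "i < m" "a < N" for i a
  proof -
    have "braket (v i) (e a) = (\<Sum>b<N. cnj (v i $ b) * (if a = b then 1 else 0))"
      unfolding braket_def e_def using vc[OF that(1)] that(2) by (intro sum.cong) auto
    also have "\<dots> = cnj (v i $ a)" using that(2) by (simp add: if_distrib cong: if_cong)
    finally show ?thesis .
  qed
  have "real m = (\<Sum>i<m. Re (braket (v i) (v i)))" using on unfolding orthonormal_def by simp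
  also have "\<dots> = (\<Sum>i<m. \<Sum>a<N. (cmod (braket (v i) (e a)))\<^sup>2)"
  proof (intro sum.cong refl)
    fix i assume "i \<in> {..<m}"
    then have "dim_vec (v i) = N" "\<And>a. a < N \<Longrightarrow> braket (v i) (e a) = cnj (v i $ a)" using vc ve by auto
    then show "Re (braket (v i) (v i)) = (\<Sum>a<N. (cmod (braket (v i) (e a)))\<^sup>2)"
      by (simp add: braket_self_Re)
  qed
  also have "\<dots> = (\<Sum>a<N. \<Sum>i<m. (cmod (braket (v i) (e a)))\<^sup>2)" by (rule sum.swap)
  also have "\<dots> \<le> (\<Sum>a<N. Re (braket (e a) (e a)))"
    by (intro sum_mono bessel[OF ec vc on]) auto
  also have "\<dots> = (\<Sum>a<N. 1)"
    by (intro sum.cong refl) (simp add: braket_def e_def unit_vec_def if_distrib cong: if_cong)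
  finally show ?thesis by simp
qed

locale lz =
  fixes H :: "complex mat" and psi0 :: "complex vec" and N :: nat
  assumes H: "H \<in> carrier_mat N N" and herm: "hermitian_mat H"
    and psi0: "psi0 \<in> carrier_vec N" and psin: "braket psi0 psi0 = 1"
begin

abbreviation "kv \<equiv> krylov_vec H psi0"
abbreviation "bb \<equiv> lanczos_b H psi0"
definition "kp n = fst (lanczos H psi0 n)"
definition "al n = braket (kv n) (H *\<^sub>v kv n)"
definition "vv n = H *\<^sub>v kv n - al n \<cdot>\<^sub>v kv n - complex_of_real (bb n) \<cdot>\<^sub>v kp n"

lemma lanczos_Suc_eq: "lanczos H psi0 (Suc n) =
  (kv n, complex_of_real (1 / sqrt (Re (braket (vv n) (vv n)))) \<cdot>\<^sub>v vv n, sqrt (Re (braket (vv n) (vv n))))"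
proof -
  obtain x y z where e: "lanczos H psi0 n = (x,y,z)" by (metis prod_cases3)
  show ?thesis using e by (simp add: vv_def al_def kp_def krylov_vec_def lanczos_b_def Let_def)
qed

lemma kp_0: "kp 0 = 0\<^sub>v N" using psi0 by (simp add: kp_def)
lemma kv_0: "kv 0 = psi0" by (simp add: krylov_vec_def)
lemma bb_0: "bb 0 = 0" by (simp add: lanczos_b_def)
lemma kp_Suc: "kp (Suc n) = kv n" by (simp add: kp_def lanczos_Suc_eq del: lanczos.simps)
lemma bb_Suc: "bb (Suc n) = sqrt (Re (braket (vv n) (vv n)))"
  by (simp add: lanczos_b_def[of H psi0 "Suc n"] lanczos_Suc_eq del: lanczos.simps)
lemma kv_Suc: "kv (Suc n) = complex_of_real (1 / bb (Suc n)) \<cdot>\<^sub>v vv n"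
  by (simp add: krylov_vec_def[of H psi0 "Suc n"] lanczos_Suc_eq bb_Suc del: lanczos.simps)

lemma carriers: "kv n \<in> carrier_vec N \<and> kp n \<in> carrier_vec N"
proof (induction n)
  case 0
  then show ?case using psi0 by (simp add: kv_0 kp_0)
next
  case (Suc n)
  then have "vv n \<in> carrier_vec N" unfolding vv_def using H by simp
  then show ?case using Suc by (simp add: kv_Suc kp_Suc)
qed

lemma kvc: "kv n \<in> carrier_vec N" using carriers by simp
lemma kpc: "kp n \<in> carrier_vec N" using carriers by simp
lemma vvc: "vv n \<in> carrier_vec N" unfolding vv_def using H kvc kpc by simp
lemma dims[simp]: "dim_vec (kv n) = N" "dim_vec (kp n) = N" "dim_vec (vv n) = N"
  using kvc kpc vvc by auto

lemma bb_nonneg: "bb n \<ge> 0"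
  by (cases n) (simp_all add: bb_0 bb_Suc braket_self_nonneg)

lemma vv_eq: assumes "bb (Suc n) \<noteq> 0"
  shows "vv n = complex_of_real (bb (Suc n)) \<cdot>\<^sub>v kv (Suc n)"
  using assms vvc unfolding kv_Suc by (simp add: smult_smult_assoc)

lemma vv_zero: assumes "bb (Suc n) = 0" shows "vv n = 0\<^sub>v N"
proof -
  have "Re (braket (vv n) (vv n)) = 0" using assms braket_self_nonneg[of "vv n"] unfolding bb_Suc by simp
  then have "braket (vv n) (vv n) = 0" using braket_self_real[of "vv n"] by simp
  then show ?thesis using braket_self_zero[OF vvc] by blast
qed

lemma H_kv: "H *\<^sub>v kv n = vv n + al n \<cdot>\<^sub>v kv n + complex_of_real (bb n) \<cdot>\<^sub>v kp n"
  unfolding vv_def using H kvc[of n] kpc[of n] by (intro eq_vecI) auto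

lemma kv_norm_Suc: assumes "bb (Suc n) \<noteq> 0" shows "braket (kv (Suc n)) (kv (Suc n)) = 1"
proof -
  define r where "r = Re (braket (vv n) (vv n))"
  have r0: "r \<ge> 0" unfolding r_def by (rule braket_self_nonneg)
  have "braket (kv (Suc n)) (kv (Suc n)) = complex_of_real ((1 / bb (Suc n)) * (1 / bb (Suc n)) * r)"
    unfolding kv_Suc using vvc braket_self_real[of "vv n"]
    by (simp add: braket_smult_left[of _ N] braket_smult_right[of _ N] r_def)
  also have "(1 / bb (Suc n)) * (1 / bb (Suc n)) * r = 1"
    using assms r0 unfolding bb_Suc r_def[symmetric] by (simp add: field_simps)
  finally show ?thesis by simp
qed

lemma orth_step:
  assumes IH: "orthonormal (Suc n) kv" and nz: "bb (Suc n) \<noteq> 0"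
    and nzs: "\<And>j. j < n \<Longrightarrow> bb (Suc j) \<noteq> 0"
    and i: "i \<le> n"
  shows "braket (kv i) (kv (Suc n)) = 0"
proof -
  have ob: "braket (kv a) (kv b) = (if a = b then 1 else 0)" if "a \<le> n" "b \<le> n" for a b
    using IH that unfolding orthonormal_def by simp
  have "braket (kv i) (vv n) = 0"
  proof -
    have e1: "braket (kv i) (vv n) = braket (kv i) (H *\<^sub>v kv n) - al n * braket (kv i) (kv n)
        - complex_of_real (bb n) * braket (kv i) (kp n)"
      unfolding vv_def using H kvc kpc
      by (simp add: braket_minus_right[of _ N] braket_smult_right[of _ N])
    show ?thesis
    proof (cases "i = n")
      case True
      have "braket (kv n) (kp n) = 0"
      proof (cases n)
        case 0 then show ?thesis using kvc[of 0] by (simp add: kp_0 braket_def)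
      next
        case (Suc m) then show ?thesis using ob[of n m] by (simp add: kp_Suc)
      qed
      then show ?thesis unfolding e1 using True ob[of n n] by (simp add: al_def)
    next
      case False
      then have "i < n" using i by simp
      then obtain m where nm: "n = Suc m" by (cases n) auto
      have Hki: "H *\<^sub>v kv i = complex_of_real (bb (Suc i)) \<cdot>\<^sub>v kv (Suc i) + al i \<cdot>\<^sub>v kv i + complex_of_real (bb i) \<cdot>\<^sub>v kp i"
        using H_kv[of i] vv_eq[OF nzs[OF \<open>i < n\<close>]] by simp
      have kpi: "braket (kp i) (kv n) = 0"
      proof (cases i)
        case 0 then show ?thesis using kvc by (simp add: kp_0 braket_def)
      next
        case (Suc l) then show ?thesis using ob[of l n] \<open>i < n\<close> by (simp add: kp_Suc)
      qed
      have "braket (kv i) (H *\<^sub>v kv n) = braket (H *\<^sub>v kv i) (kv n)"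
        by (rule hermitian_braket[OF herm H kvc kvc])
      also have "\<dots> = complex_of_real (bb (Suc i)) * braket (kv (Suc i)) (kv n)
          + cnj (al i) * braket (kv i) (kv n) + complex_of_real (bb i) * braket (kp i) (kv n)"
        unfolding Hki using kvc kpc by (simp add: braket_add_left[of _ N] braket_smult_left[of _ N])
      also have "\<dots> = (if Suc i = n then complex_of_real (bb n) else 0)"
        using ob[of "Suc i" n] ob[of i n] kpi \<open>i < n\<close> by auto
      finally have h1: "braket (kv i) (H *\<^sub>v kv n) = (if Suc i = n then complex_of_real (bb n) else 0)" .
      have "braket (kv i) (kp n) = (if i = m then 1 else 0)" using ob[of i m] \<open>i < n\<close> nm by (simp add: kp_Suc)
      then show ?thesis unfolding e1 h1 using ob[of i n] \<open>i < n\<close> nm by auto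
    qed
  qed
  then show ?thesis unfolding kv_Suc using vvc kvc by (simp add: braket_smult_right[of _ N])
qed

lemma orthonormal_kv: "(\<And>j. j < n \<Longrightarrow> bb (Suc j) \<noteq> 0) \<Longrightarrow> orthonormal (Suc n) kv"
proof (induction n)
  case 0
  then show ?case using psin by (simp add: orthonormal_def kv_0)
next
  case (Suc n)
  then have IH: "orthonormal (Suc n) kv" by simp
  have nz: "bb (Suc n) \<noteq> 0" using Suc.prems by simp
  have o1: "braket (kv i) (kv (Suc n)) = 0" if "i \<le> n" for i
    by (rule orth_step[OF IH nz _ that]) (use Suc.prems in simp)
  show ?case unfolding orthonormal_def
  proof (intro allI impI)
    fix i j assume i: "i < Suc (Suc n)" and j: "j < Suc (Suc n)"
    show "braket (kv i) (kv j) = (if i = j then 1 else 0)"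
    proof (cases "i = Suc n")
      case True
      show ?thesis
      proof (cases "j = Suc n")
        case True then show ?thesis using \<open>i = Suc n\<close> kv_norm_Suc[OF nz] by simp
      next
        case False
        then have "j \<le> n" using j by simp
        then have "braket (kv (Suc n)) (kv j) = cnj (braket (kv j) (kv (Suc n)))"
          using kvc by (simp add: braket_cnj[of _ N])
        then show ?thesis using o1[OF \<open>j \<le> n\<close>] True False by simp
      qed
    next
      case False
      then have "i \<le> n" using i by simp
      show ?thesis
      proof (cases "j = Suc n")
        case True then show ?thesis using o1[OF \<open>i \<le> n\<close>] \<open>i \<le> n\<close> by simp
      next
        case False
        then show ?thesis using IH \<open>i \<le> n\<close> j unfolding orthonormal_def by simp
      qed
    qed
  qed
qed

lemma exists_zero: "\<exists>n. bb (Suc n) = 0"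
proof (rule ccontr)
  assume "\<not> ?thesis"
  then have "orthonormal (Suc N) kv" by (intro orthonormal_kv) auto
  from orthonormal_card[OF kvc this] show False by simp
qed

definition "L = (LEAST n. bb (Suc n) = 0)"
lemma dK_eq: "krylov_dim H psi0 = Suc L" by (simp add: krylov_dim_def L_def)
lemma bb_L: "bb (Suc L) = 0" unfolding L_def by (rule LeastI_ex[OF exists_zero])
lemma bb_lt: "j < L \<Longrightarrow> bb (Suc j) \<noteq> 0" unfolding L_def by (rule not_less_Least)
lemma orth_dK: "orthonormal (krylov_dim H psi0) kv" unfolding dK_eq by (rule orthonormal_kv[OF bb_lt])
lemma dK_le: "krylov_dim H psi0 \<le> N" by (rule orthonormal_card[OF kvc orth_dK])

definition "inspan x \<longleftrightarrow> x \<in> carrier_vec N \<and>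
   (\<exists>g. x = vec N (\<lambda>a. \<Sum>j<krylov_dim H psi0. g j * kv j $ a))"

lemma inspan_kv: "j < krylov_dim H psi0 \<Longrightarrow> inspan (kv j)"
  unfolding inspan_def
proof (intro conjI exI)
  assume j: "j < krylov_dim H psi0"
  show "kv j \<in> carrier_vec N" by (rule kvc)
  show "kv j = vec N (\<lambda>a. \<Sum>l<krylov_dim H psi0. (if l = j then 1 else 0) * kv l $ a)"
  proof (rule eq_vecI)
    fix a assume a: "a < dim_vec (vec N (\<lambda>a. \<Sum>l<krylov_dim H psi0. (if l = j then 1 else 0) * kv l $ a))"
    have "(\<Sum>l<krylov_dim H psi0. (if l = j then 1 else 0) * kv l $ a) = (\<Sum>l<krylov_dim H psi0. if l = j then kv l $ a else 0)"
      by (intro sum.cong) auto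
    then show "kv j $ a = vec N (\<lambda>a. \<Sum>l<krylov_dim H psi0. (if l = j then 1 else 0) * kv l $ a) $ a"
      using j a by simp
  qed simp
qed

lemma inspan_zero: "inspan (0\<^sub>v N)"
  unfolding inspan_def by (intro conjI exI[of _ "\<lambda>_. 0"]) (auto intro: eq_vecI)

lemma inspan_add: "inspan x \<Longrightarrow> inspan y \<Longrightarrow> inspan (x + y)"
  unfolding inspan_def
proof (elim conjE exE, intro conjI)
  fix g h assume x: "x \<in> carrier_vec N" and y: "y \<in> carrier_vec N"
    and gx: "x = vec N (\<lambda>a. \<Sum>j<krylov_dim H psi0. g j * kv j $ a)"
    and hy: "y = vec N (\<lambda>a. \<Sum>j<krylov_dim H psi0. h j * kv j $ a)"
  show "x + y \<in> carrier_vec N" using x y by simp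
  show "\<exists>f. x + y = vec N (\<lambda>a. \<Sum>j<krylov_dim H psi0. f j * kv j $ a)"
    by (rule exI[of _ "\<lambda>j. g j + h j"]) (use gx hy in \<open>auto intro!: eq_vecI simp: sum.distrib distrib_right\<close>)
qed

lemma inspan_smult: "inspan x \<Longrightarrow> inspan (c \<cdot>\<^sub>v x)"
  unfolding inspan_def
proof (elim conjE exE, intro conjI)
  fix g assume x: "x \<in> carrier_vec N"
    and gx: "x = vec N (\<lambda>a. \<Sum>j<krylov_dim H psi0. g j * kv j $ a)"
  show "c \<cdot>\<^sub>v x \<in> carrier_vec N" using x by simp
  show "\<exists>f. c \<cdot>\<^sub>v x = vec N (\<lambda>a. \<Sum>j<krylov_dim H psi0. f j * kv j $ a)"
    by (rule exI[of _ "\<lambda>j. c * g j"]) (use gx in \<open>auto intro!: eq_vecI simp: sum_distrib_left ac_simps\<close>)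
qed

lemma H_kv_inspan: assumes i: "i < krylov_dim H psi0"
  shows "inspan (H *\<^sub>v kv i)"
proof -
  have iL: "i \<le> L" using i unfolding dK_eq by simp
  have v: "inspan (vv i)"
  proof (cases "i < L")
    case True
    have "Suc i < krylov_dim H psi0" using True unfolding dK_eq by simp
    then show ?thesis using vv_eq[OF bb_lt[OF True]] inspan_smult inspan_kv by simp
  next
    case False then have "i = L" using iL by simp
    then show ?thesis using vv_zero[OF bb_L] inspan_zero by simp
  qed
  have p: "inspan (kp i)"
  proof (cases i)
    case 0 then show ?thesis using inspan_zero by (simp add: kp_0)
  next
    case (Suc l) then show ?thesis using i inspan_kv[of l] by (simp add: kp_Suc)
  qed
  show ?thesis unfolding H_kv using v p inspan_kv[OF i] by (intro inspan_add inspan_smult)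
qed

end

lemma shannon_fK:
  fixes p :: "nat \<Rightarrow> real" and d :: nat
  assumes p0: "\<And>n. n < d \<Longrightarrow> p n \<ge> 0" and ps: "(\<Sum>n<d. p n) = 1"
  shows "- (\<Sum>n<d. xlogx (p n)) \<le> f_K (\<Sum>n<d. real n * p n)"
proof -
  define K where "K = (\<Sum>n<d. real n * p n)"
  have K0: "K \<ge> 0" unfolding K_def using p0 by (intro sum_nonneg) auto
  show ?thesis
  proof (cases "K = 0")
    case True
    have "\<forall>n\<in>{..<d}. real n * p n = 0"
      using True p0 unfolding K_def by (subst sum_nonneg_eq_0_iff[symmetric]) auto
    then have pz0: "n = 0 \<or> p n = 0" if "n < d" for n using that by auto
    have pz: "p n = 0" if "n < d" "n \<noteq> 0" for n using pz0[OF that(1)] that(2) by blast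
    have "d > 0" using ps by (cases d) auto
    have "(\<Sum>n<d. p n) = p 0"
      using pz \<open>d > 0\<close> by (intro sum.mono_neutral_right[of "{..<d}" "{0}", simplified]) auto
    then have p1: "p 0 = 1" using ps by simp
    have "(\<Sum>n<d. xlogx (p n)) = 0"
    proof (intro sum.neutral ballI)
      fix n assume "n \<in> {..<d}"
      then show "xlogx (p n) = 0" using pz p1 by (cases "n = 0") (auto simp: xlogx_def)
    qed
    then show ?thesis using True unfolding K_def[symmetric] by (simp add: f_K_def xlogx_def)
  next
    case False
    then have Kp: "K > 0" using K0 by simp
    define q where "q = K / (1 + K)"
    define g where "g n = q ^ n / (1 + K)" for n :: nat
    have q0: "q > 0" unfolding q_def using Kp by simp
    have gp: "g n > 0" for n unfolding g_def using q0 Kp by simp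
    have gibbs: "- xlogx (p n) \<le> g n - p n - p n * ln (g n)" if n: "n < d" for n
    proof (cases "p n = 0")
      case True then show ?thesis using gp[of n] by (simp add: xlogx_def)
    next
      case False
      then have pn: "p n > 0" using p0[OF n] by simp
      have "ln (g n / p n) \<le> g n / p n - 1" using gp[of n] pn by (intro ln_le_minus_one) simp
      then have "p n * ln (g n / p n) \<le> p n * (g n / p n - 1)" using pn by (intro mult_left_mono) auto
      moreover have "p n * (g n / p n - 1) = g n - p n" using pn by (simp add: field_simps)
      moreover have "ln (g n / p n) = ln (g n) - ln (p n)" using pn gp[of n] by (simp add: ln_div)
      ultimately have "p n * ln (g n) - p n * ln (p n) \<le> g n - p n" by (simp add: right_diff_distrib)
      then show ?thesis using pn by (simp add: xlogx_def)
    qed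
    have sg: "(\<Sum>n<d. g n) \<le> 1"
    proof -
      have "1 - q = 1 / (1 + K)" unfolding q_def using Kp by (simp add: field_simps)
      then have "(\<Sum>n<d. g n) = (1 - q) * (\<Sum>n<d. q ^ n)" unfolding g_def by (simp add: sum_divide_distrib)
      also have "\<dots> = 1 - q ^ d" by (rule one_diff_power_eq[symmetric])
      also have "\<dots> \<le> 1" using q0 by simp
      finally show ?thesis .
    qed
    have lng: "ln (g n) = real n * ln q - ln (1 + K)" for n
      unfolding g_def using q0 Kp by (simp add: ln_div ln_realpow)
    have "- (\<Sum>n<d. xlogx (p n)) \<le> (\<Sum>n<d. g n - p n - p n * ln (g n))"
      unfolding sum_negf[symmetric] by (intro sum_mono gibbs) auto
    also have "\<dots> = (\<Sum>n<d. g n) - 1 - (\<Sum>n<d. p n * ln (g n))" using ps by (simp add: sum_subtractf)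
    also have "(\<Sum>n<d. p n * ln (g n)) = K * ln q - ln (1 + K)"
    proof -
      have e: "(\<Sum>n<d. p n * ln (g n)) = (\<Sum>n<d. real n * p n * ln q) - (\<Sum>n<d. p n * ln (1 + K))"
        unfolding lng by (simp add: right_diff_distrib sum_subtractf ac_simps)
      have e1: "(\<Sum>n<d. real n * p n * ln q) = K * ln q" unfolding K_def by (simp add: sum_distrib_right)
      have e2: "(\<Sum>n<d. p n * ln (1 + K)) = ln (1 + K)" using ps by (simp add: sum_distrib_right[symmetric])
      show ?thesis unfolding e e1 e2 ..
    qed
    also have "(\<Sum>n<d. g n) - 1 - (K * ln q - ln (1 + K)) \<le> ln (1 + K) - K * ln q" using sg by simp
    also have "\<dots> = f_K K"
      unfolding f_K_def xlogx_def q_def using Kp by (simp add: ln_div algebra_simps)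
    finally show ?thesis unfolding K_def .
  qed
qed

lemma mult_lincomb: fixes A :: "complex mat"
  assumes A: "A \<in> carrier_mat n m" and y: "\<And>j. j \<in> J \<Longrightarrow> y j \<in> carrier_vec m"
  shows "A *\<^sub>v vec m (\<lambda>a. \<Sum>j\<in>J. c j * y j $ a) = vec n (\<lambda>a. \<Sum>j\<in>J. c j * (A *\<^sub>v y j) $ a)"
proof (rule eq_vecI)
  fix a assume "a < dim_vec (vec n (\<lambda>a. \<Sum>j\<in>J. c j * (A *\<^sub>v y j) $ a))"
  then have a: "a < n" by simp
  have "(A *\<^sub>v vec m (\<lambda>a. \<Sum>j\<in>J. c j * y j $ a)) $ a = (\<Sum>b<m. A $$ (a,b) * (\<Sum>j\<in>J. c j * y j $ b))"
    using mult_mat_vec_sum[OF A _ a, of "vec m (\<lambda>a. \<Sum>j\<in>J. c j * y j $ a)"] by simp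
  also have "\<dots> = (\<Sum>b<m. \<Sum>j\<in>J. c j * (A $$ (a,b) * y j $ b))"
    by (simp add: sum_distrib_left mult.left_commute)
  also have "\<dots> = (\<Sum>j\<in>J. \<Sum>b<m. c j * (A $$ (a,b) * y j $ b))" by (rule sum.swap)
  also have "\<dots> = (\<Sum>j\<in>J. c j * (\<Sum>b<m. A $$ (a,b) * y j $ b))"
    by (simp add: sum_distrib_left)
  also have "\<dots> = (\<Sum>j\<in>J. c j * (A *\<^sub>v y j) $ a)"
    by (intro sum.cong refl) (simp add: mult_mat_vec_sum[OF A y a] del: index_mult_mat_vec)
  finally show "(A *\<^sub>v vec m (\<lambda>a. \<Sum>j\<in>J. c j * y j $ a)) $ a = vec n (\<lambda>a. \<Sum>j\<in>J. c j * (A *\<^sub>v y j) $ a) $ a"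
    using a by simp
qed (use A in simp)

lemma exp_sums_complex: "(\<lambda>k. z ^ k / fact k) sums exp (z::complex)"
proof -
  have "(\<lambda>k. z ^ k /\<^sub>R fact k) = (\<lambda>k. z ^ k / fact k)"
    by (rule ext) (simp add: scaleR_conv_of_real divide_inverse mult.commute)
  then show ?thesis using exp_converges[of z] by simp
qed

lemma mat_unit_entry: fixes A :: "complex mat" shows "A \<in> carrier_mat n n \<Longrightarrow> a < n \<Longrightarrow> b < n \<Longrightarrow> (A *\<^sub>v unit_vec n b) $ a = A $$ (a,b)"
proof -
  assume A: "A \<in> carrier_mat n n" and ab: "a < n" "b < n"
  have "(A *\<^sub>v unit_vec n b) $ a = (\<Sum>c<n. A $$ (a,c) * unit_vec n b $ c)"
    by (rule mult_mat_vec_sum[OF A _ ab(1)]) simp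
  also have "\<dots> = (\<Sum>c<n. if c = b then A $$ (a,c) else 0)"
    by (intro sum.cong) (auto simp: unit_vec_def)
  also have "\<dots> = A $$ (a,b)" using ab by simp
  finally show ?thesis .
qed

context lz
begin

abbreviation "dK \<equiv> krylov_dim H psi0"

lemma inspan_lincomb: fixes m :: nat shows "(\<And>j. j < m \<Longrightarrow> inspan (y j)) \<Longrightarrow> inspan (vec N (\<lambda>a. \<Sum>j<m. c j * y j $ a))"
proof (induction m)
  case 0
  have "vec N (\<lambda>a. \<Sum>j<0. c j * y j $ a) = 0\<^sub>v N" by (intro eq_vecI) auto
  then show ?case using inspan_zero by simp
next
  case (Suc m)
  have yc: "y m \<in> carrier_vec N" using Suc.prems[of m] unfolding inspan_def by simp
  have "vec N (\<lambda>a. \<Sum>j<Suc m. c j * y j $ a) = vec N (\<lambda>a. \<Sum>j<m. c j * y j $ a) + c m \<cdot>\<^sub>v y m"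
    using yc by (intro eq_vecI) auto
  then show ?case using Suc by (simp add: inspan_add inspan_smult)
qed

lemma inspan_expand: assumes "inspan x"
  shows "x = vec N (\<lambda>a. \<Sum>j<dK. braket (kv j) x * kv j $ a)"
proof -
  from assms obtain g where x: "x \<in> carrier_vec N" and gx: "x = vec N (\<lambda>a. \<Sum>j<dK. g j * kv j $ a)"
    unfolding inspan_def by blast
  have "braket (kv i) x = g i" if i: "i < dK" for i
  proof -
    have "braket (kv i) x = (\<Sum>j<dK. g j * braket (kv i) (kv j))"
      by (subst gx, rule braket_lincomb_right[OF kvc]) (use kvc in auto)
    also have "\<dots> = g i" by (rule orthonormal_sum_delta[OF orth_dK i])
    finally show ?thesis .
  qed
  then show ?thesis using gx by (intro eq_vecI) auto
qed

lemma inspan_H: assumes "inspan x" shows "inspan (H *\<^sub>v x)"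
proof -
  have "H *\<^sub>v x = H *\<^sub>v vec N (\<lambda>a. \<Sum>j<dK. braket (kv j) x * kv j $ a)"
    using inspan_expand[OF assms] by simp
  also have "\<dots> = vec N (\<lambda>a. \<Sum>j<dK. braket (kv j) x * (H *\<^sub>v kv j) $ a)"
    by (rule mult_lincomb[OF H]) (use kvc in auto)
  finally show ?thesis using H_kv_inspan by (simp add: inspan_lincomb)
qed

end

locale lzt = lz +
  fixes t :: real and u :: "nat \<Rightarrow> complex vec" and lam :: "nat \<Rightarrow> real"
  assumes eig: "eigsys N u H lam"
begin

interpretation E: eigsys N u H lam by (rule eig)

definition "M = (- \<i> * complex_of_real t) \<cdot>\<^sub>m H"
definition "mu l = (- \<i> * complex_of_real t) * complex_of_real (lam l)" for l

lemma Mc: "M \<in> carrier_mat N N" unfolding M_def using H by simp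

lemma inspan_M: "inspan x \<Longrightarrow> inspan (M *\<^sub>v x)"
  unfolding M_def using H by (simp add: smult_mat_mult_vec[OF H] inspan_def[of x] inspan_smult inspan_H)

lemma inspan_Mpow: "inspan x \<Longrightarrow> inspan ((M ^\<^sub>m k) *\<^sub>v x)"
proof (induction k arbitrary: x)
  case 0
  then show ?case using Mc by (simp add: inspan_def)
next
  case (Suc k)
  have xc: "x \<in> carrier_vec N" using Suc.prems unfolding inspan_def by simp
  have "(M ^\<^sub>m Suc k) *\<^sub>v x = (M ^\<^sub>m k) *\<^sub>v (M *\<^sub>v x)"
    using Mc xc by (simp add: assoc_mult_mat_vec[of _ N N _ N])
  then show ?case using Suc.IH inspan_M Suc.prems by simp
qed

lemma ev_M: "l < N \<Longrightarrow> eigenvector M (u l) (mu l)"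
proof -
  assume l: "l < N"
  have uc: "u l \<in> carrier_vec N" using E.vc l by simp
  have "u l \<noteq> 0\<^sub>v N"
  proof
    assume "u l = 0\<^sub>v N"
    then have "braket (u l) (u l) = 0" by (simp add: braket_def)
    then show False using E.on l unfolding orthonormal_def by simp
  qed
  moreover have "M *\<^sub>v u l = mu l \<cdot>\<^sub>v u l"
    unfolding M_def mu_def using uc by (simp add: smult_mat_mult_vec[OF H] E.ev[OF l] smult_smult_assoc)
  ultimately show ?thesis unfolding eigenvector_def using uc Mc by auto
qed

lemma Mpow_vec: assumes x: "x \<in> carrier_vec N"
  shows "(M ^\<^sub>m k) *\<^sub>v x = vec N (\<lambda>a. \<Sum>l<N. (mu l ^ k * braket (u l) x) * u l $ a)"
proof -
  have "(M ^\<^sub>m k) *\<^sub>v x = (M ^\<^sub>m k) *\<^sub>v vec N (\<lambda>a. \<Sum>l<N. braket (u l) x * u l $ a)"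
    using E.expand[OF x] by simp
  also have "\<dots> = vec N (\<lambda>a. \<Sum>l<N. braket (u l) x * ((M ^\<^sub>m k) *\<^sub>v u l) $ a)"
    by (rule mult_lincomb) (use Mc E.vc in auto)
  also have "\<dots> = vec N (\<lambda>a. \<Sum>l<N. (mu l ^ k * braket (u l) x) * u l $ a)"
    by (intro eq_vecI) (auto intro!: sum.cong simp: eigenvector_pow[OF Mc ev_M] E.vdim)
  finally show ?thesis .
qed

lemma Mpow_entry: assumes ab: "a < N" "b < N"
  shows "(M ^\<^sub>m k) $$ (a,b) = (\<Sum>l<N. mu l ^ k * cnj (u l $ b) * u l $ a)"
proof -
  have bu: "braket (u l) (unit_vec N b) = cnj (u l $ b)" if "l < N" for l
  proof -
    have "braket (u l) (unit_vec N b) = (\<Sum>c<N. if c = b then cnj (u l $ c) else 0)"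
      unfolding braket_def using that by (intro sum.cong) (auto simp: E.vdim unit_vec_def)
    then show ?thesis using ab by simp
  qed
  have "(M ^\<^sub>m k) $$ (a,b) = ((M ^\<^sub>m k) *\<^sub>v unit_vec N b) $ a"
    using mat_unit_entry[OF pow_carrier_mat[OF Mc] ab] by simp
  also have "\<dots> = (\<Sum>l<N. mu l ^ k * cnj (u l $ b) * u l $ a)"
    unfolding Mpow_vec[OF unit_vec_carrier] using ab bu by simp
  finally show ?thesis .
qed

definition "Ev = mat_exp M"

lemma series_entry: assumes ab: "a < N" "b < N"
  shows "(\<lambda>k. (M ^\<^sub>m k) $$ (a,b) / fact k) sums (\<Sum>l<N. exp (mu l) * cnj (u l $ b) * u l $ a)"
proof -
  have "(\<lambda>k. \<Sum>l<N. mu l ^ k / fact k * (cnj (u l $ b) * u l $ a)) sums (\<Sum>l<N. exp (mu l) * (cnj (u l $ b) * u l $ a))"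
    by (intro sums_sum sums_mult2 exp_sums_complex)
  moreover have "(\<lambda>k. (M ^\<^sub>m k) $$ (a,b) / fact k) = (\<lambda>k. \<Sum>l<N. mu l ^ k / fact k * (cnj (u l $ b) * u l $ a))"
    by (rule ext) (simp add: Mpow_entry[OF ab] sum_divide_distrib ac_simps)
  ultimately show ?thesis by (simp add: ac_simps)
qed

lemma Ev_entry: assumes ab: "a < N" "b < N"
  shows "Ev $$ (a,b) = (\<Sum>l<N. exp (mu l) * cnj (u l $ b) * u l $ a)"
proof -
  have "Ev $$ (a,b) = (\<Sum>k. (M ^\<^sub>m k) $$ (a,b) / fact k)"
    unfolding Ev_def mat_exp_def using ab Mc by simp
  also have "\<dots> = (\<Sum>l<N. exp (mu l) * cnj (u l $ b) * u l $ a)"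
    by (rule sums_unique[symmetric, OF series_entry[OF ab]])
  finally show ?thesis .
qed

lemma Evc: "Ev \<in> carrier_mat N N" unfolding Ev_def mat_exp_def using Mc by simp

definition "psit = Ev *\<^sub>v psi0"

lemma psitc: "psit \<in> carrier_vec N" unfolding psit_def using Evc psi0 by simp

lemma psit_series: assumes a: "a < N"
  shows "(\<lambda>k. ((M ^\<^sub>m k) *\<^sub>v psi0) $ a / fact k) sums (psit $ a)"
proof -
  have "(\<lambda>k. \<Sum>b<N. (M ^\<^sub>m k) $$ (a,b) / fact k * psi0 $ b) sums (\<Sum>b<N. Ev $$ (a,b) * psi0 $ b)"
    using a by (intro sums_sum sums_mult2) (simp add: Ev_entry series_entry)
  moreover have "(\<Sum>b<N. Ev $$ (a,b) * psi0 $ b) = psit $ a"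
    unfolding psit_def by (rule mult_mat_vec_sum[OF Evc psi0 a, symmetric])
  moreover have "(\<lambda>k. \<Sum>b<N. (M ^\<^sub>m k) $$ (a,b) / fact k * psi0 $ b) = (\<lambda>k. ((M ^\<^sub>m k) *\<^sub>v psi0) $ a / fact k)"
    by (rule ext) (simp add: mult_mat_vec_sum[OF pow_carrier_mat[OF Mc] psi0 a] sum_divide_distrib ac_simps
        del: index_mult_mat_vec)
  ultimately show ?thesis by simp
qed

lemma psit_inspan_form: "psit = vec N (\<lambda>a. \<Sum>j<dK. braket (kv j) psit * kv j $ a)"
proof (rule eq_vecI)
  fix a assume "a < dim_vec (vec N (\<lambda>a. \<Sum>j<dK. braket (kv j) psit * kv j $ a))"
  then have a: "a < N" by simp
  define P where "P = projm N dK kv"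
  have Pc: "P \<in> carrier_mat N N" unfolding P_def by simp
  have Pf: "P *\<^sub>v x = x" if "inspan x" for x
    using inspan_expand[OF that] projm_mult[of x N dK kv] that kvc unfolding inspan_def P_def by simp
  have ps0: "inspan psi0" using inspan_kv[of 0] kv_0 dK_eq by simp
  have s1: "(\<lambda>k. \<Sum>b<N. P $$ (a,b) * (((M ^\<^sub>m k) *\<^sub>v psi0) $ b / fact k)) sums (\<Sum>b<N. P $$ (a,b) * psit $ b)"
    by (intro sums_sum sums_mult psit_series) simp
  have "(\<Sum>b<N. P $$ (a,b) * (((M ^\<^sub>m k) *\<^sub>v psi0) $ b / fact k)) = ((M ^\<^sub>m k) *\<^sub>v psi0) $ a / fact k" for k
  proof -
    have e1: "(\<Sum>b<N. P $$ (a,b) * (((M ^\<^sub>m k) *\<^sub>v psi0) $ b / fact k)) = (\<Sum>b<N. P $$ (a,b) * ((M ^\<^sub>m k) *\<^sub>v psi0) $ b) / fact k"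
      by (simp only: sum_divide_distrib times_divide_eq_right)
    have e2: "(\<Sum>b<N. P $$ (a,b) * ((M ^\<^sub>m k) *\<^sub>v psi0) $ b) = (P *\<^sub>v ((M ^\<^sub>m k) *\<^sub>v psi0)) $ a"
      by (rule mult_mat_vec_sum[OF Pc _ a, symmetric]) (rule mult_mat_vec_carrier[OF pow_carrier_mat[OF Mc] psi0])
    have e3: "P *\<^sub>v ((M ^\<^sub>m k) *\<^sub>v psi0) = (M ^\<^sub>m k) *\<^sub>v psi0" by (rule Pf[OF inspan_Mpow[OF ps0]])
    show ?thesis unfolding e1 e2 e3 ..
  qed
  then have "(\<lambda>k. ((M ^\<^sub>m k) *\<^sub>v psi0) $ a / fact k) sums (\<Sum>b<N. P $$ (a,b) * psit $ b)" using s1 by simp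
  then have "psit $ a = (\<Sum>b<N. P $$ (a,b) * psit $ b)" using psit_series[OF a] sums_unique2 by blast
  also have "\<dots> = (P *\<^sub>v psit) $ a" by (rule mult_mat_vec_sum[OF Pc psitc a, symmetric])
  also have "\<dots> = vec N (\<lambda>a. \<Sum>j<dK. braket (kv j) psit * kv j $ a) $ a"
    unfolding P_def projm_mult[OF psitc kvc] ..
  finally show "psit $ a = vec N (\<lambda>a. \<Sum>j<dK. braket (kv j) psit * kv j $ a) $ a" .
qed (use psitc in simp)

lemma psit_u: "psit = vec N (\<lambda>a. \<Sum>l<N. (exp (mu l) * braket (u l) psi0) * u l $ a)"
proof (rule eq_vecI)
  fix a assume "a < dim_vec (vec N (\<lambda>a. \<Sum>l<N. (exp (mu l) * braket (u l) psi0) * u l $ a))"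
  then have a: "a < N" by simp
  have "psit $ a = (\<Sum>b<N. Ev $$ (a,b) * psi0 $ b)" unfolding psit_def by (rule mult_mat_vec_sum[OF Evc psi0 a])
  also have "\<dots> = (\<Sum>b<N. \<Sum>l<N. exp (mu l) * cnj (u l $ b) * u l $ a * psi0 $ b)"
    using a by (intro sum.cong refl) (simp add: Ev_entry sum_distrib_right)
  also have "\<dots> = (\<Sum>l<N. (exp (mu l) * braket (u l) psi0) * u l $ a)"
    by (subst sum.swap) (simp add: braket_def E.vdim sum_distrib_left sum_distrib_right ac_simps)
  finally show "psit $ a = vec N (\<lambda>a. \<Sum>l<N. (exp (mu l) * braket (u l) psi0) * u l $ a) $ a" using a by simp
qed (use psitc in simp)

lemma psit_norm: "braket psit psit = 1"
proof -
  have bu: "braket (u l) psit = exp (mu l) * braket (u l) psi0" if l: "l < N" for l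
  proof -
    have "braket (u l) psit = (\<Sum>j<N. (exp (mu j) * braket (u j) psi0) * braket (u l) (u j))"
      by (subst psit_u, rule braket_lincomb_right[OF E.vc[OF l]]) (use E.vc in auto)
    also have "\<dots> = exp (mu l) * braket (u l) psi0" by (rule orthonormal_sum_delta[OF E.on l])
    finally show ?thesis .
  qed
  have em: "Re (mu l) = 0" for l unfolding mu_def by simp
  have "Re (braket psit psit) = (\<Sum>l<N. (cmod (braket (u l) psit))\<^sup>2)" by (rule E.norm_sum[OF psitc, symmetric])
  also have "\<dots> = (\<Sum>l<N. (cmod (braket (u l) psi0))\<^sup>2)"
    by (intro sum.cong refl) (simp add: bu norm_mult em)
  also have "\<dots> = Re (braket psi0 psi0)" by (rule E.norm_sum[OF psi0])
  also have "\<dots> = 1" using psin by simp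
  finally show ?thesis using braket_self_real[of psit] by simp
qed

lemma coef_norm: "(\<Sum>j<dK. (cmod (braket (kv j) psit))\<^sup>2) = 1"
proof -
  have "braket psit psit = (\<Sum>j<dK. cnj (braket (kv j) psit) * braket (kv j) psit)"
    by (subst (1) psit_inspan_form, rule braket_lincomb_left[OF psitc]) (use kvc in auto)
  also have "\<dots> = complex_of_real (\<Sum>j<dK. (cmod (braket (kv j) psit))\<^sup>2)" by (simp add: cnj_mult_self)
  finally have e: "braket psit psit = complex_of_real (\<Sum>j<dK. (cmod (braket (kv j) psit))\<^sup>2)" .
  show ?thesis using e psit_norm by (metis of_real_eq_1_iff)
qed

end

theorem proposition1:
  fixes dA dB :: nat and H :: "complex mat" and psi0 :: "complex vec" and t :: real
  assumes "dA > 0" and "dB > 0"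
    and "H \<in> carrier_mat (dA * dB) (dA * dB)" and "hermitian_mat H"
    and "psi0 \<in> carrier_vec (dA * dB)" and "braket psi0 psi0 = 1"
  shows
    "let dK = krylov_dim H psi0;
         k = krylov_vec H psi0;
         psi_t = mat_exp ((- \<i> * complex_of_real t) \<cdot>\<^sub>m H) *\<^sub>v psi0;
         c = (\<lambda>n. braket (k n) psi_t);
         K = (\<Sum>n<dK. real n * (cmod (c n))\<^sup>2)
     in vn_entropy (ptrace_B dA dB (proj psi_t))
        \<le> real dK * ((\<Sum>n<dK. (cmod (c n))\<^sup>2 * vn_entropy (ptrace_B dA dB (proj (k n)))) + f_K K)"
proof -
  have LZ: "lz H psi0 (dA * dB)" by (unfold_locales) (use assms in auto)
  interpret lz H psi0 "dA * dB" by (rule LZ)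
  obtain u lam where eig: "eigsys (dA * dB) u H lam" using spectral_eigsys[OF assms(3,4)] by blast
  interpret lzt H psi0 "dA * dB" t u lam by (rule lzt.intro[OF LZ]) (rule lzt_axioms.intro[OF eig])
  have pt: "mat_exp ((- \<i> * complex_of_real t) \<cdot>\<^sub>m H) *\<^sub>v psi0 = psit"
    unfolding psit_def Ev_def M_def ..
  define c where "c n = braket (kv n) psit" for n
  define p where "p n = (cmod (c n))\<^sup>2" for n
  have kn: "braket (kv n) (kv n) = 1" if "n < dK" for n
    using orth_dK that unfolding orthonormal_def by simp
  have eb: "vn_entropy (rhoA dA dB psit) \<le> real dK * (- (\<Sum>n<dK. xlogx (p n)) +
           (\<Sum>n<dK. p n * vn_entropy (rhoA dA dB (kv n))))"
    unfolding p_def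
    by (rule entropy_bound[OF assms(2) kvc kn _ psit_norm])
       (simp_all add: c_def psit_inspan_form[symmetric] coef_norm)
  have sh: "- (\<Sum>n<dK. xlogx (p n)) \<le> f_K (\<Sum>n<dK. real n * p n)"
    by (rule shannon_fK) (simp_all add: p_def c_def coef_norm)
  have "real dK * (- (\<Sum>n<dK. xlogx (p n)) + (\<Sum>n<dK. p n * vn_entropy (rhoA dA dB (kv n))))
      \<le> real dK * ((\<Sum>n<dK. p n * vn_entropy (rhoA dA dB (kv n))) + f_K (\<Sum>n<dK. real n * p n))"
    using sh by (intro mult_left_mono) auto
  with eb show ?thesis unfolding Let_def pt rhoA_def p_def c_def by simp
qed

end
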